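(* Let $A$ be a random variable with values in $\{u,v\}$, $\mathbb{P}(A=u)=p_u$, $\mathbb{P}(A=v)=p_v$, $p_u+p_v=1$, and let $(U,V)$ be independent of $A$ and follow a bivariate $t$ distribution with location vector $(\mu,\mu)$, $\mu<0$, scale matrix $\Sigma=\begin{pmatrix}\sigma^2&\rho\sigma^2\\ \rho\sigma^2&\sigma^2\end{pmatrix}$ with $\sigma>0$, and degrees of freedom $\delta>2$. Let \[f(z)=p_u\,\mathbb{P}(U>z)\,\mathbb{E}[U+V\mid U>z]+p_v\,\mathbb{P}(V>z)\,\mathbb{E}[U+V\mid V>z].\] If \[-1\le\rho<2\left(\frac{-\mu}{\sigma}\right)W\left(\frac{-\mu}{\sigma}\right)-1,\qquad W(\alpha)=\left(\frac{\delta-2}{\delta}\right)\frac{1-T_\delta(\alpha;0,1)}{t_{\delta-2}\left(\alpha;0,\frac{\delta}{\delta-2}\right)},\] then $f(0)<0$.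
   Context: For $\nu>0$, $t_\nu(x;m,s^2)=\frac{\Gamma\left(\frac{\nu+1}{2}\right)}{\sqrt{s^2\nu\pi}\,\Gamma\left(\frac{\nu}{2}\right)}\left(1+\frac{(x-m)^2}{s^2\nu}\right)^{-\frac{\nu+1}{2}}$ is the density of the univariate $t$ distribution with $\nu$ degrees of freedom, location $m$ and squared scale $s^2$, and $T_\nu(\cdot;m,s^2)$ is the corresponding CDF. The bivariate $t$ distribution with location $m$, scale matrix $\Sigma$ and $\delta$ degrees of freedom has density proportional to $\left(1+(x-m)^\top\Sigma^{-1}(x-m)/\delta\right)^{-(\delta+2)/2}$; its marginals are univariate $t_\delta$ with location $\mu$ and squared scale $\sigma^2$. $f(0)=\mathbb{E}[D(U+V)]$ with $D=\mathbb{I}(A=u,U>0)+\mathbb{I}(A=v,V>0)$ is the long-run average overall performance under zero-threshold adoption. *)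

theory Defs
  imports "HOL-Probability.Probability"
begin

text \<open>Density of the univariate t distribution with nu degrees of freedom,
  location m and squared scale s2.\<close>
definition t_density :: "real \<Rightarrow> real \<Rightarrow> real \<Rightarrow> real \<Rightarrow> real" where
  "t_density \<nu> m s2 x =
     Gamma ((\<nu> + 1) / 2) / (sqrt (s2 * \<nu> * pi) * Gamma (\<nu> / 2))
     * (1 + (x - m)^2 / (s2 * \<nu>)) powr (- (\<nu> + 1) / 2)"

definition t_cdf :: "real \<Rightarrow> real \<Rightarrow> real \<Rightarrow> real \<Rightarrow> real" where
  "t_cdf \<nu> m s2 x = (LBINT y:{..x}. t_density \<nu> m s2 y)"

definition t_measure :: "real \<Rightarrow> real \<Rightarrow> real \<Rightarrow> real measure" where
  "t_measure \<nu> m s2 = density lborel (\<lambda>x. ennreal (t_density \<nu> m s2 x))"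

definition bivt_density :: "real \<Rightarrow> real \<Rightarrow> real \<Rightarrow> real \<Rightarrow> real \<times> real \<Rightarrow> real" where
  "bivt_density \<mu> \<sigma> \<rho> \<delta> xy =
     (let a = fst xy - \<mu>; b = snd xy - \<mu>;
          q = (a^2 - 2 * \<rho> * a * b + b^2) / (\<sigma>^2 * (1 - \<rho>^2))
      in Gamma ((\<delta> + 2) / 2) / (Gamma (\<delta> / 2) * \<delta> * pi * \<sigma>^2 * sqrt (1 - \<rho>^2))
         * (1 + q / \<delta>) powr (- (\<delta> + 2) / 2))"

text \<open>For |rho| = 1 the
  scale matrix is singular and the distribution is the standard degenerate one,
  concentrated on a line: (U,V) = (X, 2 mu - X) for rho = -1 and (X, X) for
  rho = 1, with X univariate t(delta; mu, sigma^2).\<close>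
definition bivt_measure :: "real \<Rightarrow> real \<Rightarrow> real \<Rightarrow> real \<Rightarrow> (real \<times> real) measure" where
  "bivt_measure \<mu> \<sigma> \<rho> \<delta> =
     (if \<rho> = -1 then distr (t_measure \<delta> \<mu> (\<sigma>^2)) lborel (\<lambda>x. (x, 2 * \<mu> - x))
      else if \<rho> = 1 then distr (t_measure \<delta> \<mu> (\<sigma>^2)) lborel (\<lambda>x. (x, x))
      else density lborel (\<lambda>xy. ennreal (bivt_density \<mu> \<sigma> \<rho> \<delta> xy)))"

definition cond_exp_event :: "'a measure \<Rightarrow> ('a \<Rightarrow> real) \<Rightarrow> 'a set \<Rightarrow> real" where
  "cond_exp_event M X S = (\<integral>\<omega>. X \<omega> * indicator S \<omega> \<partial>M) / measure M S"

definition W_fun :: "real \<Rightarrow> real \<Rightarrow> real" where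
  "W_fun \<delta> \<alpha> = ((\<delta> - 2) / \<delta>) * (1 - t_cdf \<delta> 0 1 \<alpha>)
                 / t_density (\<delta> - 2) 0 (\<delta> / (\<delta> - 2)) \<alpha>"

end

theory Submission
  imports Defs "HOL-Real_Asymp.Real_Asymp"
begin

lemma gauss_nn:
  fixes t :: real assumes t: "t > 0"
  shows "(\<integral>\<^sup>+x. ennreal (exp (- (t * x\<^sup>2))) \<partial>lborel) = ennreal (sqrt (pi / t))"
proof -
  define s where "s = 1 / sqrt (2 * t)"
  have s: "s > 0" using t by (simp add: s_def)
  have s2: "2 * s\<^sup>2 = 1 / t" using t by (simp add: s_def power_divide)
  have eq: "exp (- (t * x\<^sup>2)) = sqrt (pi / t) * normal_density 0 s x" for x
  proof -
    have "normal_density 0 s x = 1 / sqrt (pi / t) * exp (- (t * x\<^sup>2))"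
    proof -
      have "normal_density 0 s x = 1 / sqrt (2 * pi * s\<^sup>2) * exp (-(x - 0)\<^sup>2/ (2 * s\<^sup>2))"
        by (simp add: normal_density_def)
      also have "2 * pi * s\<^sup>2 = pi / t" using s2 by (simp add: field_simps)
      also have "(-(x - 0)\<^sup>2/ (2 * s\<^sup>2)) = - (t * x\<^sup>2)" by (simp add: s2)
      finally show ?thesis by simp
    qed
    then show ?thesis using t by simp
  qed
  have "(\<integral>\<^sup>+x. ennreal (exp (- (t * x\<^sup>2))) \<partial>lborel) = (\<integral>\<^sup>+x. ennreal (sqrt (pi / t)) * ennreal (normal_density 0 s x) \<partial>lborel)"
    using t by (intro nn_integral_cong) (simp add: eq ennreal_mult normal_density_nonneg)
  also have "\<dots> = ennreal (sqrt (pi / t)) * (\<integral>\<^sup>+x. ennreal (normal_density 0 s x) \<partial>lborel)"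
    by (rule nn_integral_cmult) simp
  also have "(\<integral>\<^sup>+x. ennreal (normal_density 0 s x) \<partial>lborel) = 1"
    using s by (subst nn_integral_eq_integral) (auto simp: integrable_normal_density integral_normal_density normal_density_nonneg)
  finally show ?thesis by simp
qed

lemma gamma_scaled:
  fixes s c :: real assumes s: "s > 0" and c: "c > 0"
  shows "(\<integral>\<^sup>+u. ennreal (indicator {0..} u * u powr (s - 1) * exp (- (c * u))) \<partial>lborel)
         = ennreal (Gamma s / c powr s)"
proof -
  let ?X = "(\<integral>\<^sup>+u. ennreal (indicator {0..} u * u powr (s - 1) * exp (- (c * u))) \<partial>lborel)"
  have "ennreal (Gamma s) = (\<integral>\<^sup>+v. ennreal (indicator {0..} v * v powr (s - 1) / exp v) \<partial>lborel)"
    using Gamma_conv_nn_integral_real[OF s] by simp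
  also have "\<dots> = ennreal c * (\<integral>\<^sup>+u. ennreal (indicator {0..} (0 + c * u) * (0 + c * u) powr (s - 1) / exp (0 + c * u)) \<partial>lborel)"
    using c by (subst nn_integral_real_affine[where t=0 and c=c]) auto
  also have "(\<integral>\<^sup>+u. ennreal (indicator {0..} (0 + c * u) * (0 + c * u) powr (s - 1) / exp (0 + c * u)) \<partial>lborel)
      = (\<integral>\<^sup>+u. ennreal (c powr (s - 1)) * ennreal (indicator {0..} u * u powr (s - 1) * exp (- (c * u))) \<partial>lborel)"
  proof (intro nn_integral_cong)
    fix u :: real
    show "ennreal (indicator {0..} (0 + c * u) * (0 + c * u) powr (s - 1) / exp (0 + c * u)) =
          ennreal (c powr (s - 1)) * ennreal (indicator {0..} u * u powr (s - 1) * exp (- (c * u)))"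
    proof (cases "u \<ge> 0")
      case True
      then show ?thesis using c
        by (simp add: powr_mult ennreal_mult[symmetric] exp_minus field_simps zero_le_mult_iff)
    next
      case False
      then show ?thesis using c by (simp add: indicator_def zero_le_mult_iff)
    qed
  qed
  also have "\<dots> = ennreal (c powr (s - 1)) * ?X"
    by (rule nn_integral_cmult) simp
  finally have eq: "ennreal (Gamma s) = ennreal (c * c powr (s - 1)) * ?X"
    using c by (simp add: ennreal_mult mult.assoc)
  have "c * c powr (s - 1) = c powr s"
    using c by (simp add: powr_diff)
  then have eq2: "ennreal (Gamma s) = ennreal (c powr s) * ?X" using eq by simp
  have cp: "c powr s > 0" using c by simp
  have "?X = ennreal (1 / c powr s) * (ennreal (c powr s) * ?X)"
    using cp by (simp add: mult.assoc[symmetric] ennreal_mult[symmetric])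
  also have "\<dots> = ennreal (Gamma s / c powr s)"
    using cp s by (simp add: eq2[symmetric] ennreal_mult[symmetric] Gamma_real_pos less_imp_le)
  finally show ?thesis .
qed

lemma J_formula:
  fixes s :: real assumes s: "s > 1/2"
  shows "(\<integral>\<^sup>+w. ennreal ((1 + w\<^sup>2) powr (- s)) \<partial>lborel) = ennreal (sqrt pi * Gamma (s - 1/2) / Gamma s)"
proof -
  have s0: "s > 0" using s by simp
  have Gs: "Gamma s > 0" using s0 by (simp add: Gamma_real_pos)
  let ?f = "\<lambda>w u. ennreal (indicator {0..} u * u powr (s - 1) * exp (- ((1 + w\<^sup>2) * u)))"
  have "ennreal (Gamma s) * (\<integral>\<^sup>+w. ennreal ((1 + w\<^sup>2) powr (- s)) \<partial>lborel)
      = (\<integral>\<^sup>+w. ennreal (Gamma s / (1 + w\<^sup>2) powr s) \<partial>lborel)"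
    using Gs by (subst nn_integral_cmult[symmetric]) (auto simp: ennreal_mult[symmetric] powr_minus divide_inverse intro!: nn_integral_cong)
  also have "\<dots> = (\<integral>\<^sup>+w. \<integral>\<^sup>+u. ?f w u \<partial>lborel \<partial>lborel)"
    by (intro nn_integral_cong, subst gamma_scaled[OF s0]) (auto simp: add_pos_nonneg)
  also have "\<dots> = (\<integral>\<^sup>+u. \<integral>\<^sup>+w. ?f w u \<partial>lborel \<partial>lborel)"
    by (rule lborel_pair.Fubini'[symmetric]) measurable
  also have "\<dots> = (\<integral>\<^sup>+u. ennreal (sqrt pi) * ennreal (indicator {0..} u * u powr ((s - 1/2) - 1) / exp u) \<partial>lborel)"
  proof (rule nn_integral_cong_AE)
    show "AE u in lborel. (\<integral>\<^sup>+w. ?f w u \<partial>lborel) = ennreal (sqrt pi) * ennreal (indicator {0..} u * u powr ((s - 1/2) - 1) / exp u)"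
    proof (rule AE_I[where N="{0}"])
      show "{u \<in> space lborel. \<not> ((\<integral>\<^sup>+w. ?f w u \<partial>lborel) = ennreal (sqrt pi) * ennreal (indicator {0..} u * u powr ((s - 1/2) - 1) / exp u))} \<subseteq> {0}"
      proof safe
        fix u :: real
        assume ne: "(\<integral>\<^sup>+w. ?f w u \<partial>lborel) \<noteq> ennreal (sqrt pi) * ennreal (indicator {0..} u * u powr ((s - 1/2) - 1) / exp u)"
        show "u = 0"
        proof (rule ccontr)
          assume u0: "u \<noteq> 0"
          show False
          proof (cases "u > 0")
            case False
            then have "u < 0" using u0 by simp
            then show False using ne by (simp add: indicator_def)
          next
            case True
            have "(\<integral>\<^sup>+w. ?f w u \<partial>lborel) = (\<integral>\<^sup>+w. ennreal (u powr (s - 1) * exp (- u)) * ennreal (exp (- (u * w\<^sup>2))) \<partial>lborel)"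
              using True by (intro nn_integral_cong) (simp add: ennreal_mult[symmetric] algebra_simps exp_add[symmetric])
            also have "\<dots> = ennreal (u powr (s - 1) * exp (- u)) * ennreal (sqrt (pi / u))"
              by (subst nn_integral_cmult) (auto simp: gauss_nn[OF True])
            also have "\<dots> = ennreal (sqrt pi) * ennreal (indicator {0..} u * u powr ((s - 1/2) - 1) / exp u)"
            proof -
              have "u powr (s - 1) * sqrt (pi / u) = sqrt pi * u powr ((s - 1/2) - 1)"
              proof -
                have "u powr (s - 1) = u powr ((s - 1/2) - 1) * u powr (1/2)"
                  by (simp add: powr_add[symmetric])
                moreover have "u powr (1/2) = sqrt u" using True by (simp add: powr_half_sqrt)
                moreover have "sqrt (pi / u) = sqrt pi / sqrt u" by (simp add: real_sqrt_divide)
                ultimately show ?thesis using True by simp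
              qed
              then show ?thesis using True
                by (simp add: ennreal_mult[symmetric] exp_minus field_simps)
            qed
            finally show False using ne by simp
          qed
        qed
      qed
    qed auto
  qed
  also have "\<dots> = ennreal (sqrt pi) * ennreal (Gamma (s - 1/2))"
    using s by (subst nn_integral_cmult) (auto simp: Gamma_conv_nn_integral_real)
  also have "\<dots> = ennreal (sqrt pi * Gamma (s - 1/2))"
    using s Gamma_real_pos[of "s - 1/2"] by (simp add: ennreal_mult)
  finally have eq: "ennreal (Gamma s) * (\<integral>\<^sup>+w. ennreal ((1 + w\<^sup>2) powr (- s)) \<partial>lborel) = ennreal (sqrt pi * Gamma (s - 1/2))" .
  have "(\<integral>\<^sup>+w. ennreal ((1 + w\<^sup>2) powr (- s)) \<partial>lborel) = ennreal (1 / Gamma s) * (ennreal (Gamma s) * (\<integral>\<^sup>+w. ennreal ((1 + w\<^sup>2) powr (- s)) \<partial>lborel))"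
    using Gs by (simp add: mult.assoc[symmetric] ennreal_mult[symmetric])
  also have "\<dots> = ennreal (sqrt pi * Gamma (s - 1/2) / Gamma s)"
    using Gs s by (simp add: eq ennreal_mult[symmetric] Gamma_real_pos less_imp_le)
  finally show ?thesis .
qed

lemma t_density_measurable[measurable]: "t_density \<nu> m s2 \<in> borel_measurable borel"
  unfolding t_density_def by measurable

lemma t_density_pos: assumes "\<nu> > 0" "s2 > 0" shows "t_density \<nu> m s2 x > 0"
proof -
  have "1 + (x - m)\<^sup>2 / (s2 * \<nu>) > 0" using assms by (simp add: add_pos_nonneg)
  then show ?thesis unfolding t_density_def using assms
    by (intro mult_pos_pos divide_pos_pos) (auto simp: Gamma_real_pos)
qed

lemma t_density_nonneg: assumes "\<nu> > 0" "s2 > 0" shows "t_density \<nu> m s2 x \<ge> 0"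
  using less_imp_le[OF t_density_pos[OF assms]] .

lemma t_density_nn_integral:
  assumes nu: "\<nu> > 0" and s2: "s2 > 0"
  shows "(\<integral>\<^sup>+x. ennreal (t_density \<nu> m s2 x) \<partial>lborel) = 1"
proof -
  define c where "c = sqrt (s2 * \<nu>)"
  define K where "K = Gamma ((\<nu> + 1) / 2) / (sqrt (s2 * \<nu> * pi) * Gamma (\<nu> / 2))"
  have c: "c > 0" using nu s2 by (simp add: c_def)
  have cc: "c\<^sup>2 = s2 * \<nu>" using nu s2 by (simp add: c_def)
  have K: "K > 0" using nu s2 by (simp add: K_def Gamma_real_pos)
  have ex: "- (\<nu> + 1) / 2 = - ((\<nu> + 1) / 2)" by (rule minus_divide_left[symmetric])
  have pt: "t_density \<nu> m s2 (m + c * x) = K * (1 + x\<^sup>2) powr (- ((\<nu> + 1) / 2))" for x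
  proof -
    have "(m + c * x - m)\<^sup>2 / (s2 * \<nu>) = x\<^sup>2"
      using cc nu s2 by (simp add: power_mult_distrib)
    then show ?thesis unfolding t_density_def K_def ex by simp
  qed
  have "(\<integral>\<^sup>+x. ennreal (t_density \<nu> m s2 x) \<partial>lborel)
      = ennreal \<bar>c\<bar> * (\<integral>\<^sup>+x. ennreal (t_density \<nu> m s2 (m + c * x)) \<partial>lborel)"
    using c by (subst nn_integral_real_affine[where t=m and c=c]) auto
  also have "\<dots> = ennreal c * (ennreal K * (\<integral>\<^sup>+x. ennreal ((1 + x\<^sup>2) powr (- ((\<nu> + 1) / 2))) \<partial>lborel))"
    using c K by (subst nn_integral_cmult[symmetric]) (auto simp: pt ennreal_mult)
  also have "(\<integral>\<^sup>+x. ennreal ((1 + x\<^sup>2) powr (- ((\<nu> + 1) / 2))) \<partial>lborel)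
      = ennreal (sqrt pi * Gamma ((\<nu> + 1) / 2 - 1/2) / Gamma ((\<nu> + 1) / 2))"
    using nu by (intro J_formula) simp
  also have "(\<nu> + 1) / 2 - 1/2 = \<nu> / 2" by (simp only: add_divide_distrib)
  also have "ennreal c * (ennreal K * ennreal (sqrt pi * Gamma (\<nu> / 2) / Gamma ((\<nu> + 1) / 2)))
      = ennreal (c * K * (sqrt pi * Gamma (\<nu> / 2) / Gamma ((\<nu> + 1) / 2)))"
  proof -
    have "Gamma (\<nu> / 2) > 0" "Gamma ((\<nu> + 1) / 2) > 0" using nu by (auto simp: Gamma_real_pos)
    then have X: "sqrt pi * Gamma (\<nu> / 2) / Gamma ((\<nu> + 1) / 2) \<ge> 0" by simp
    define X where "X = sqrt pi * Gamma (\<nu> / 2) / Gamma ((\<nu> + 1) / 2)"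
    have "ennreal c * (ennreal K * ennreal X) = ennreal (c * K * X)"
      using c K X unfolding X_def[symmetric] by (simp add: ennreal_mult mult.assoc)
    then show ?thesis unfolding X_def .
  qed
  also have "c * K * (sqrt pi * Gamma (\<nu> / 2) / Gamma ((\<nu> + 1) / 2)) = 1"
  proof -
    have "sqrt (s2 * \<nu> * pi) = c * sqrt pi" by (simp add: c_def real_sqrt_mult)
    moreover have "Gamma (\<nu> / 2) > 0" "Gamma ((\<nu> + 1) / 2) > 0" using nu by (auto simp: Gamma_real_pos)
    ultimately show ?thesis using c unfolding K_def by (simp add: field_simps)
  qed
  finally show ?thesis by simp
qed

lemma prob_space_t_measure:
  assumes "\<nu> > 0" "s2 > 0" shows "prob_space (t_measure \<nu> m s2)"
  unfolding t_measure_def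
  by (rule prob_spaceI) (simp add: emeasure_density t_density_nn_integral[OF assms])

lemma sets_t_measure[simp, measurable_cong]: "sets (t_measure \<nu> m s2) = sets borel"
  by (simp add: t_measure_def)

lemma space_t_measure[simp]: "space (t_measure \<nu> m s2) = UNIV"
  by (simp add: t_measure_def)

lemma t_measure_affine:
  assumes d: "\<delta> > 0" and s: "\<sigma> > 0"
  shows "t_measure \<delta> \<mu> (\<sigma>\<^sup>2) = distr (t_measure \<delta> 0 1) lborel (\<lambda>z. \<mu> + \<sigma> * z)"
proof (rule measure_eqI)
  fix A :: "real set" assume A: "A \<in> sets (t_measure \<delta> \<mu> (\<sigma>\<^sup>2))"
  then have [measurable]: "A \<in> sets borel" by simp
  have td: "\<sigma> * t_density \<delta> \<mu> (\<sigma>\<^sup>2) (\<mu> + \<sigma> * z) = t_density \<delta> 0 1 z" for z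
  proof -
    have "sqrt (\<sigma>\<^sup>2 * \<delta> * pi) = \<sigma> * sqrt (\<delta> * pi)" using s by (simp add: real_sqrt_mult)
    moreover have "(\<mu> + \<sigma> * z - \<mu>)\<^sup>2 / (\<sigma>\<^sup>2 * \<delta>) = (z - 0)\<^sup>2 / (1 * \<delta>)"
      using s by (simp add: power_mult_distrib)
    ultimately show ?thesis unfolding t_density_def using s by (simp add: field_simps)
  qed
  have "emeasure (t_measure \<delta> \<mu> (\<sigma>\<^sup>2)) A = (\<integral>\<^sup>+x. ennreal (t_density \<delta> \<mu> (\<sigma>\<^sup>2) x) * indicator A x \<partial>lborel)"
    unfolding t_measure_def by (simp add: emeasure_density)
  also have "\<dots> = ennreal \<bar>\<sigma>\<bar> * (\<integral>\<^sup>+z. ennreal (t_density \<delta> \<mu> (\<sigma>\<^sup>2) (\<mu> + \<sigma> * z)) * indicator A (\<mu> + \<sigma> * z) \<partial>lborel)"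
    using s by (subst nn_integral_real_affine[where t=\<mu> and c=\<sigma>]) auto
  also have "\<dots> = (\<integral>\<^sup>+z. ennreal (t_density \<delta> 0 1 z) * indicator A (\<mu> + \<sigma> * z) \<partial>lborel)"
    using s t_density_nonneg[OF d, of "\<sigma>\<^sup>2" \<mu>] by (subst nn_integral_cmult[symmetric]) (auto simp: td[symmetric] ennreal_mult mult.assoc intro!: nn_integral_cong)
  also have "\<dots> = emeasure (distr (t_measure \<delta> 0 1) lborel (\<lambda>z. \<mu> + \<sigma> * z)) A"
    by (simp add: emeasure_distr t_measure_def emeasure_density vimage_def indicator_def)
  finally show "emeasure (t_measure \<delta> \<mu> (\<sigma>\<^sup>2)) A = emeasure (distr (t_measure \<delta> 0 1) lborel (\<lambda>z. \<mu> + \<sigma> * z)) A" .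
qed simp

lemma t_measure_reflect:
  shows "distr (t_measure \<nu> m s2) lborel (\<lambda>x. 2 * m - x) = t_measure \<nu> m s2"
proof (rule measure_eqI)
  fix A :: "real set" assume A: "A \<in> sets (distr (t_measure \<nu> m s2) lborel (\<lambda>x. 2 * m - x))"
  then have [measurable]: "A \<in> sets borel" by simp
  have td: "t_density \<nu> m s2 (2 * m - x) = t_density \<nu> m s2 x" for x
  proof -
    have "(2 * m - x - m)\<^sup>2 = (x - m)\<^sup>2" by (simp add: power2_eq_square algebra_simps)
    then show ?thesis unfolding t_density_def by simp
  qed
  have "emeasure (t_measure \<nu> m s2) A = (\<integral>\<^sup>+x. ennreal (t_density \<nu> m s2 x) * indicator A x \<partial>lborel)"
    unfolding t_measure_def by (simp add: emeasure_density)
  also have "\<dots> = ennreal \<bar>-1\<bar> * (\<integral>\<^sup>+z. ennreal (t_density \<nu> m s2 (2 * m + (-1) * z)) * indicator A (2 * m + (-1) * z) \<partial>lborel)"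
    by (subst nn_integral_real_affine[where t="2 * m" and c="-1"]) auto
  also have "\<dots> = (\<integral>\<^sup>+z. ennreal (t_density \<nu> m s2 z) * indicator A (2 * m - z) \<partial>lborel)"
    by (simp add: td)
  also have "\<dots> = emeasure (distr (t_measure \<nu> m s2) lborel (\<lambda>x. 2 * m - x)) A"
    by (simp add: emeasure_distr t_measure_def emeasure_density vimage_def indicator_def)
  finally show "emeasure (distr (t_measure \<nu> m s2) lborel (\<lambda>x. 2 * m - x)) A = emeasure (t_measure \<nu> m s2) A" by simp
qed simp

definition Kd :: "real \<Rightarrow> real" where
  "Kd \<delta> = Gamma ((\<delta> + 1) / 2) / (sqrt (1 * \<delta> * pi) * Gamma (\<delta> / 2))"

lemma t_std_eq: "t_density \<delta> 0 1 z = Kd \<delta> * (1 + z\<^sup>2 / \<delta>) powr (- (\<delta> + 1) / 2)"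
  unfolding t_density_def Kd_def by simp

lemma Kd_pos: "\<delta> > 0 \<Longrightarrow> Kd \<delta> > 0"
  unfolding Kd_def by (simp add: Gamma_real_pos)

definition Fd :: "real \<Rightarrow> real \<Rightarrow> real" where
  "Fd \<delta> z = - (Kd \<delta> * \<delta> / (\<delta> - 1)) * (1 + z\<^sup>2 / \<delta>) powr (- (\<delta> - 1) / 2)"

lemma Fd_deriv:
  assumes d: "\<delta> > 1"
  shows "(Fd \<delta> has_real_derivative (z * t_density \<delta> 0 1 z)) (at z)"
proof -
  have b: "1 + z\<^sup>2 / \<delta> > 0" using d by (simp add: add_pos_nonneg)
  have "((\<lambda>z. (1 + z\<^sup>2 / \<delta>) powr (- (\<delta> - 1) / 2)) has_real_derivative
        ((- (\<delta> - 1) / 2) * (1 + z\<^sup>2 / \<delta>) powr (- (\<delta> - 1) / 2 - 1) * (2 * z / \<delta>))) (at z)"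
    using b d by (auto intro!: derivative_eq_intros simp: field_simps)
  then have "(Fd \<delta> has_real_derivative
       (- (Kd \<delta> * \<delta> / (\<delta> - 1)) * ((- (\<delta> - 1) / 2) * (1 + z\<^sup>2 / \<delta>) powr (- (\<delta> - 1) / 2 - 1) * (2 * z / \<delta>)))) (at z)"
    unfolding Fd_def[abs_def] by (rule DERIV_cmult)
  moreover have "- (Kd \<delta> * \<delta> / (\<delta> - 1)) * ((- (\<delta> - 1) / 2) * (1 + z\<^sup>2 / \<delta>) powr (- (\<delta> - 1) / 2 - 1) * (2 * z / \<delta>))
      = z * t_density \<delta> 0 1 z"
  proof -
    have e: "- (\<delta> - 1) / 2 - 1 = - (\<delta> + 1) / 2" by (simp add: field_simps)
    show ?thesis unfolding t_std_eq e using d by (simp add: field_simps)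
  qed
  ultimately show ?thesis by simp
qed

lemma Fd_lim:
  assumes d: "\<delta> > 1"
  shows "(Fd \<delta> \<longlongrightarrow> 0) at_top"
proof -
  have "LIM z at_top. 1 + z\<^sup>2 / \<delta> :> at_top"
    using d by real_asymp
  then have "((\<lambda>z. (1 + z\<^sup>2 / \<delta>) powr (- (\<delta> - 1) / 2)) \<longlongrightarrow> 0) at_top"
    using d by (intro tendsto_neg_powr) auto
  then have "((\<lambda>z. - (Kd \<delta> * \<delta> / (\<delta> - 1)) * (1 + z\<^sup>2 / \<delta>) powr (- (\<delta> - 1) / 2)) \<longlongrightarrow> - (Kd \<delta> * \<delta> / (\<delta> - 1)) * 0) at_top"
    by (intro tendsto_mult tendsto_const)
  then show ?thesis unfolding Fd_def[abs_def] by simp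
qed

lemma tail_nn:
  assumes d: "\<delta> > 1" and a: "a \<ge> 0"
  shows "(\<integral>\<^sup>+z. ennreal (z * t_density \<delta> 0 1 z) * indicator {a..} z \<partial>lborel) = ennreal (- Fd \<delta> a)"
proof -
  have "(\<integral>\<^sup>+z. ennreal (z * t_density \<delta> 0 1 z) * indicator {a..} z \<partial>lborel) = 0 - Fd \<delta> a"
    using d a
    by (intro nn_integral_FTC_atLeast Fd_deriv Fd_lim) (auto intro!: mult_nonneg_nonneg t_density_nonneg)
  then show ?thesis by simp
qed

lemma Gamma_plus1_pos: "(z::real) > 0 \<Longrightarrow> Gamma (z + 1) = z * Gamma z"
  by (rule Gamma_plus1) auto

lemma t_std_sym: "t_density \<delta> 0 1 (- z) = t_density \<delta> 0 1 z"
  unfolding t_std_eq by simp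

lemma Fd_nonpos: "\<delta> > 1 \<Longrightarrow> Fd \<delta> a \<le> 0"
  unfolding Fd_def using Kd_pos[of \<delta>] by (simp add: mult_nonneg_nonneg)

lemma integrable_t_std_moment:
  assumes d: "\<delta> > 1"
  shows "integrable lborel (\<lambda>z. t_density \<delta> 0 1 z * z)"
proof (rule integrableI_bounded)
  show "(\<lambda>z. t_density \<delta> 0 1 z * z) \<in> borel_measurable lborel" by measurable
  have tn: "\<And>z. t_density \<delta> 0 1 z \<ge> 0" using d by (intro t_density_nonneg) auto
  let ?A = "\<integral>\<^sup>+z. ennreal (z * t_density \<delta> 0 1 z) * indicator {0..} z \<partial>lborel"
  have A: "?A = ennreal (- Fd \<delta> 0)" using tail_nn[OF d, of 0] by simp
  have "(\<integral>\<^sup>+z. ennreal (norm (t_density \<delta> 0 1 z * z)) \<partial>lborel)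
      = (\<integral>\<^sup>+z. ennreal (z * t_density \<delta> 0 1 z) * indicator {0..} z + ennreal (\<bar>z\<bar> * t_density \<delta> 0 1 z) * indicator {..<0} z \<partial>lborel)"
  proof (intro nn_integral_cong)
    fix z :: real
    show "ennreal (norm (t_density \<delta> 0 1 z * z)) = ennreal (z * t_density \<delta> 0 1 z) * indicator {0..} z + ennreal (\<bar>z\<bar> * t_density \<delta> 0 1 z) * indicator {..<0} z"
      using tn[of z] by (cases "z \<ge> 0") (simp_all add: abs_mult indicator_def abs_of_nonneg, simp add: algebra_simps)
  qed
  also have "\<dots> = ?A + (\<integral>\<^sup>+z. ennreal (\<bar>z\<bar> * t_density \<delta> 0 1 z) * indicator {..<0} z \<partial>lborel)"
    by (rule nn_integral_add) auto
  finally have eq1: "(\<integral>\<^sup>+z. ennreal (norm (t_density \<delta> 0 1 z * z)) \<partial>lborel) = ?A + (\<integral>\<^sup>+z. ennreal (\<bar>z\<bar> * t_density \<delta> 0 1 z) * indicator {..<0} z \<partial>lborel)" .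
  have "(\<integral>\<^sup>+z. ennreal (\<bar>z\<bar> * t_density \<delta> 0 1 z) * indicator {..<0} z \<partial>lborel)
     = ennreal \<bar>-1\<bar> * (\<integral>\<^sup>+z. ennreal (\<bar>0 + (-1) * z\<bar> * t_density \<delta> 0 1 (0 + (-1) * z)) * indicator {..<0} (0 + (-1) * z) \<partial>lborel)"
    by (subst nn_integral_real_affine[where t=0 and c="-1"]) auto
  also have "\<dots> = (\<integral>\<^sup>+z. ennreal (\<bar>z\<bar> * t_density \<delta> 0 1 z) * indicator {0<..} z \<partial>lborel)"
    by (simp add: t_std_sym indicator_def)
  also have "\<dots> \<le> ?A"
  proof (rule nn_integral_mono)
    fix z :: real
    show "ennreal (\<bar>z\<bar> * t_density \<delta> 0 1 z) * indicator {0<..} z \<le> ennreal (z * t_density \<delta> 0 1 z) * indicator {0..} z"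
      by (cases "z > 0") (simp_all add: indicator_def)
  qed
  finally have le: "(\<integral>\<^sup>+z. ennreal (\<bar>z\<bar> * t_density \<delta> 0 1 z) * indicator {..<0} z \<partial>lborel) \<le> ?A" .
  have "(\<integral>\<^sup>+z. ennreal (norm (t_density \<delta> 0 1 z * z)) \<partial>lborel) \<le> ?A + ?A"
    unfolding eq1 using le by (rule add_left_mono)
  also have "\<dots> < \<infinity>" unfolding A by simp
  finally show "(\<integral>\<^sup>+z. ennreal (norm (t_density \<delta> 0 1 z * z)) \<partial>lborel) < \<infinity>" .
qed

lemma integrable_t_std:
  assumes d: "\<delta> > 0"
  shows "integrable lborel (t_density \<delta> 0 1)" and "(\<integral>z. t_density \<delta> 0 1 z \<partial>lborel) = 1"
proof -
  have hb: "has_bochner_integral lborel (t_density \<delta> 0 1) 1"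
    using d by (intro has_bochner_integral_nn_integral) (auto intro!: AE_I2 t_density_nonneg simp: t_density_nn_integral)
  then show "integrable lborel (t_density \<delta> 0 1)" by (rule integrable.intros)
  show "(\<integral>z. t_density \<delta> 0 1 z \<partial>lborel) = 1" using hb by (rule has_bochner_integral_integral_eq)
qed

lemma tail_prob:
  assumes d: "\<delta> > 0"
  shows "(\<integral>z. t_density \<delta> 0 1 z * indicator {a<..} z \<partial>lborel) = 1 - t_cdf \<delta> 0 1 a"
proof -
  have i1: "integrable lborel (\<lambda>z. t_density \<delta> 0 1 z * indicator {a<..} z)"
    using integrable_t_std(1)[OF d] by (intro integrable_real_mult_indicator) auto
  have i2: "integrable lborel (\<lambda>z. t_density \<delta> 0 1 z * indicator {..a} z)"
    using integrable_t_std(1)[OF d] by (intro integrable_real_mult_indicator) auto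
  have "1 = (\<integral>z. t_density \<delta> 0 1 z \<partial>lborel)" using integrable_t_std(2)[OF d] by simp
  also have "\<dots> = (\<integral>z. t_density \<delta> 0 1 z * indicator {a<..} z + t_density \<delta> 0 1 z * indicator {..a} z \<partial>lborel)"
    by (intro Bochner_Integration.integral_cong) (simp_all add: indicator_def)
  also have "\<dots> = (\<integral>z. t_density \<delta> 0 1 z * indicator {a<..} z \<partial>lborel) + (\<integral>z. t_density \<delta> 0 1 z * indicator {..a} z \<partial>lborel)"
    using i1 i2 by (rule Bochner_Integration.integral_add)
  also have "(\<integral>z. t_density \<delta> 0 1 z * indicator {..a} z \<partial>lborel) = t_cdf \<delta> 0 1 a"
    unfolding t_cdf_def set_lebesgue_integral_def by (intro Bochner_Integration.integral_cong) (simp_all add: indicator_def)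
  finally show ?thesis by simp
qed

lemma tail_moment:
  assumes d: "\<delta> > 1" and a: "a \<ge> 0"
  shows "(\<integral>z. t_density \<delta> 0 1 z * z * indicator {a<..} z \<partial>lborel) = - Fd \<delta> a"
proof -
  have "(\<integral>\<^sup>+z. ennreal (t_density \<delta> 0 1 z * z * indicator {a<..} z) \<partial>lborel)
      = (\<integral>\<^sup>+z. ennreal (z * t_density \<delta> 0 1 z) * indicator {a..} z \<partial>lborel)"
  proof (rule nn_integral_cong_AE)
    show "AE z in lborel. ennreal (t_density \<delta> 0 1 z * z * indicator {a<..} z) = ennreal (z * t_density \<delta> 0 1 z) * indicator {a..} z"
      by (rule AE_I[where N="{a}"]) (auto simp: indicator_def mult.commute)
  qed
  also have "\<dots> = ennreal (- Fd \<delta> a)" by (rule tail_nn[OF d a])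
  finally have "has_bochner_integral lborel (\<lambda>z. t_density \<delta> 0 1 z * z * indicator {a<..} z) (- Fd \<delta> a)"
    using d a Fd_nonpos[OF d, of a]
    by (intro has_bochner_integral_nn_integral) (auto intro!: mult_nonneg_nonneg t_density_nonneg simp: indicator_def)
  then show ?thesis by (rule has_bochner_integral_integral_eq)
qed

lemma alg0: "(a::real) \<noteq> 0 \<Longrightarrow> b \<noteq> 0 \<Longrightarrow> G1 > 0 \<Longrightarrow> G2 > 0 \<Longrightarrow> S > 0 \<Longrightarrow>
     ((a / 2 * G1) / (S * (b / 2 * G2))) * d / a * P
     = d / b * (G1 / (S * G2) * P)"
  by (simp add: field_simps)

lemma Fd_eq:
  assumes d: "\<delta> > 2"
  shows "- Fd \<delta> a = \<delta> / (\<delta> - 2) * t_density (\<delta> - 2) 0 (\<delta> / (\<delta> - 2)) a"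
proof -
  have g1: "Gamma ((\<delta> + 1) / 2) = (\<delta> - 1) / 2 * Gamma ((\<delta> - 1) / 2)"
  proof -
    have h: "(\<delta> + 1) / 2 = (\<delta> - 1) / 2 + 1" by (simp add: field_simps)
    show ?thesis unfolding h by (rule Gamma_plus1_pos) (use d in simp)
  qed
  have g2: "Gamma (\<delta> / 2) = (\<delta> - 2) / 2 * Gamma ((\<delta> - 2) / 2)"
  proof -
    have h: "\<delta> / 2 = (\<delta> - 2) / 2 + 1" by (simp add: field_simps)
    show ?thesis unfolding h by (rule Gamma_plus1_pos) (use d in simp)
  qed
  have gp: "Gamma ((\<delta> - 2) / 2) > 0" "Gamma ((\<delta> - 1) / 2) > 0" using d by (auto simp: Gamma_real_pos)
  have e1: "\<delta> / (\<delta> - 2) * (\<delta> - 2) = \<delta>" using d by simp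
  have e2: "- (\<delta> - 2 + 1) / 2 = - (\<delta> - 1) / 2" by simp
  have e3: "(\<delta> - 2 + 1) / 2 = (\<delta> - 1) / 2" by simp
  have "- Fd \<delta> a = (((\<delta> - 1) / 2 * Gamma ((\<delta> - 1) / 2)) / (sqrt (1 * \<delta> * pi) * ((\<delta> - 2) / 2 * Gamma ((\<delta> - 2) / 2)))) * \<delta> / (\<delta> - 1)
         * (1 + a\<^sup>2 / \<delta>) powr (- (\<delta> - 1) / 2)"
    unfolding Fd_def Kd_def g1 g2 by simp
  also have "\<dots> = \<delta> / (\<delta> - 2) * (Gamma ((\<delta> - 1) / 2) / (sqrt (1 * \<delta> * pi) * Gamma ((\<delta> - 2) / 2)) * (1 + a\<^sup>2 / \<delta>) powr (- (\<delta> - 1) / 2))"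
    using d gp by (intro alg0) auto
  also have "\<dots> = \<delta> / (\<delta> - 2) * t_density (\<delta> - 2) 0 (\<delta> / (\<delta> - 2)) a"
    unfolding t_density_def e1 e2 e3 by simp
  finally show ?thesis .
qed

lemma integrable_t_measure_x:
  assumes d: "\<delta> > 2" and s: "\<sigma> > 0"
  shows "integrable (t_measure \<delta> \<mu> (\<sigma>\<^sup>2)) (\<lambda>x. x)"
proof -
  have d0: "\<delta> > 0" using d by simp
  have "integrable lborel (\<lambda>z. \<mu> * t_density \<delta> 0 1 z + \<sigma> * (t_density \<delta> 0 1 z * z))"
    using integrable_t_std(1)[OF d0] integrable_t_std_moment[of \<delta>] d by auto
  then have "integrable lborel (\<lambda>z. t_density \<delta> 0 1 z *\<^sub>R (\<mu> + \<sigma> * z))"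
    by (simp add: algebra_simps)
  then have "integrable (t_measure \<delta> 0 1) (\<lambda>z. \<mu> + \<sigma> * z)"
    unfolding t_measure_def using d0
    by (subst integrable_density) (auto intro!: AE_I2 t_density_nonneg)
  then have "integrable (distr (t_measure \<delta> 0 1) lborel (\<lambda>z. \<mu> + \<sigma> * z)) (\<lambda>x. x)"
    by (subst integrable_distr_eq) auto
  then show ?thesis using t_measure_affine[OF d0 s] by simp
qed

lemma key_1d:
  assumes d: "\<delta> > 2" and s: "\<sigma> > 0" and mu: "\<mu> < 0" and rho: "-1 \<le> \<rho>"
    and hyp: "\<rho> < 2 * (-\<mu> / \<sigma>) * W_fun \<delta> (-\<mu> / \<sigma>) - 1"
  shows "(\<integral>x. (2 * \<mu> + (1 + \<rho>) * (x - \<mu>)) * indicator {0<..} x \<partial>t_measure \<delta> \<mu> (\<sigma>\<^sup>2)) < 0"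
proof -
  define \<alpha> where "\<alpha> = -\<mu> / \<sigma>"
  have al: "\<alpha> > 0" using mu s by (simp add: \<alpha>_def divide_neg_pos)
  have d0: "\<delta> > 0" and d1: "\<delta> > 1" using d by auto
  have ind: "indicator {0<..} (\<mu> + \<sigma> * z) = (indicator {\<alpha><..} z :: real)" for z
  proof -
    have "0 < \<mu> + \<sigma> * z \<longleftrightarrow> \<alpha> < z" using s unfolding \<alpha>_def by (auto simp: field_simps)
    then show ?thesis by (simp add: indicator_def)
  qed
  define P where "P = (\<integral>z. t_density \<delta> 0 1 z * indicator {\<alpha><..} z \<partial>lborel)"
  define Q where "Q = (\<integral>z. t_density \<delta> 0 1 z * z * indicator {\<alpha><..} z \<partial>lborel)"
  have P: "P = 1 - t_cdf \<delta> 0 1 \<alpha>" unfolding P_def by (rule tail_prob[OF d0])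
  have Q: "Q = - Fd \<delta> \<alpha>" unfolding Q_def using al by (intro tail_moment[OF d1]) simp
  have i1: "integrable lborel (\<lambda>z. t_density \<delta> 0 1 z * indicator {\<alpha><..} z)"
    using integrable_t_std(1)[OF d0] by (intro integrable_real_mult_indicator) auto
  have i2: "integrable lborel (\<lambda>z. t_density \<delta> 0 1 z * z * indicator {\<alpha><..} z)"
    using integrable_t_std_moment[OF d1] by (intro integrable_real_mult_indicator) auto
  have "(\<integral>x. (2 * \<mu> + (1 + \<rho>) * (x - \<mu>)) * indicator {0<..} x \<partial>t_measure \<delta> \<mu> (\<sigma>\<^sup>2))
      = (\<integral>z. (2 * \<mu> + (1 + \<rho>) * (\<mu> + \<sigma> * z - \<mu>)) * indicator {0<..} (\<mu> + \<sigma> * z) \<partial>t_measure \<delta> 0 1)"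
    unfolding t_measure_affine[OF d0 s] by (subst integral_distr) auto
  also have "\<dots> = (\<integral>z. t_density \<delta> 0 1 z *\<^sub>R ((2 * \<mu> + (1 + \<rho>) * (\<mu> + \<sigma> * z - \<mu>)) * indicator {0<..} (\<mu> + \<sigma> * z)) \<partial>lborel)"
    unfolding t_measure_def using d0 by (subst integral_density) (auto intro!: AE_I2 t_density_nonneg)
  also have "\<dots> = (\<integral>z. 2 * \<mu> * (t_density \<delta> 0 1 z * indicator {\<alpha><..} z) + ((1 + \<rho>) * \<sigma>) * (t_density \<delta> 0 1 z * z * indicator {\<alpha><..} z) \<partial>lborel)"
    unfolding ind by (intro Bochner_Integration.integral_cong) (simp_all add: algebra_simps)
  also have "\<dots> = 2 * \<mu> * P + ((1 + \<rho>) * \<sigma>) * Q"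
    unfolding P_def Q_def using i1 i2 by simp
  finally have E: "(\<integral>x. (2 * \<mu> + (1 + \<rho>) * (x - \<mu>)) * indicator {0<..} x \<partial>t_measure \<delta> \<mu> (\<sigma>\<^sup>2)) = 2 * \<mu> * P + ((1 + \<rho>) * \<sigma>) * Q" .
  define tt where "tt = t_density (\<delta> - 2) 0 (\<delta> / (\<delta> - 2)) \<alpha>"
  have tt: "tt > 0" unfolding tt_def using d by (intro t_density_pos) auto
  have Q2: "Q = \<delta> / (\<delta> - 2) * tt" unfolding Q tt_def using Fd_eq[OF d] by simp
  have Qp: "Q > 0" unfolding Q2 using tt d by simp
  have W: "W_fun \<delta> \<alpha> = ((\<delta> - 2) / \<delta>) * P / tt" unfolding W_fun_def P tt_def by simp
  have h: "1 + \<rho> < 2 * \<alpha> * W_fun \<delta> \<alpha>" using hyp unfolding \<alpha>_def by simp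
  have "(1 + \<rho>) * Q < 2 * \<alpha> * W_fun \<delta> \<alpha> * Q"
    using h Qp by (rule mult_strict_right_mono)
  also have "2 * \<alpha> * W_fun \<delta> \<alpha> * Q = 2 * \<alpha> * P"
    unfolding W Q2 using tt d by (simp add: field_simps)
  finally have "(1 + \<rho>) * Q < 2 * \<alpha> * P" .
  then have "(1 + \<rho>) * Q * \<sigma> < 2 * \<alpha> * P * \<sigma>" using s by simp
  moreover have "2 * \<alpha> * P * \<sigma> = - 2 * \<mu> * P" unfolding \<alpha>_def using s by (simp add: field_simps)
  ultimately have "2 * \<mu> * P + ((1 + \<rho>) * \<sigma>) * Q < 0" by (simp add: algebra_simps)
  then show ?thesis using E by simp
qed

definition K2 :: "real \<Rightarrow> real \<Rightarrow> real \<Rightarrow> real" where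
  "K2 \<sigma> \<rho> \<delta> = Gamma ((\<delta> + 2) / 2) / (Gamma (\<delta> / 2) * \<delta> * pi * \<sigma>^2 * sqrt (1 - \<rho>^2))"

lemma bivt_eq': "bivt_density \<mu> \<sigma> \<rho> \<delta> = (\<lambda>p. K2 \<sigma> \<rho> \<delta> *
   (1 + (((fst p - \<mu>)^2 - 2 * \<rho> * (fst p - \<mu>) * (snd p - \<mu>) + (snd p - \<mu>)^2) / (\<sigma>^2 * (1 - \<rho>^2))) / \<delta>) powr (- (\<delta> + 2) / 2))"
  unfolding bivt_density_def Let_def K2_def by (simp add: fun_eq_iff)

lemma bivt_measurable[measurable]: "bivt_density \<mu> \<sigma> \<rho> \<delta> \<in> borel_measurable borel"
proof -
  let ?Q = "\<lambda>p::real\<times>real. (fst p - \<mu>)^2 - 2 * \<rho> * (fst p - \<mu>) * (snd p - \<mu>) + (snd p - \<mu>)^2"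
  let ?G = "\<lambda>q. K2 \<sigma> \<rho> \<delta> * (1 + (q / (\<sigma>^2 * (1 - \<rho>^2))) / \<delta>) powr (- (\<delta> + 2) / 2)"
  have Q: "?Q \<in> borel_measurable borel"
    by (intro borel_measurable_continuous_onI continuous_intros)
  have G: "?G \<in> borel_measurable borel" by measurable
  have "(\<lambda>p. ?G (?Q p)) \<in> borel_measurable borel"
    by (rule measurable_compose[OF Q G])
  then show ?thesis unfolding bivt_eq' .
qed

lemma bivt_sym: "bivt_density \<mu> \<sigma> \<rho> \<delta> (x, y) = bivt_density \<mu> \<sigma> \<rho> \<delta> (y, x)"
  unfolding bivt_eq' by (simp add: algebra_simps)

lemma bivt_eq: "bivt_density \<mu> \<sigma> \<rho> \<delta> (x, y) = K2 \<sigma> \<rho> \<delta> *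
   (1 + (((x - \<mu>)^2 - 2 * \<rho> * (x - \<mu>) * (y - \<mu>) + (y - \<mu>)^2) / (\<sigma>^2 * (1 - \<rho>^2))) / \<delta>) powr (- (\<delta> + 2) / 2)"
  unfolding bivt_density_def Let_def K2_def by simp

lemma bivt_pos:
  assumes d: "\<delta> > 0" and s: "\<sigma> > 0" and r: "-1 < \<rho>" "\<rho> < 1"
  shows "bivt_density \<mu> \<sigma> \<rho> \<delta> p > 0"
proof -
  obtain x y where p: "p = (x, y)" by (cases p)
  have r2: "1 - \<rho>^2 > 0" using r by (simp add: abs_less_iff power2_less_eq_zero_iff abs_square_less_1)
  define a where "a = x - \<mu>"
  define b where "b = y - \<mu>"
  have "a^2 - 2 * \<rho> * a * b + b^2 = (b - \<rho> * a)^2 + (1 - \<rho>^2) * a^2"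
    by (simp add: power2_eq_square algebra_simps)
  also have "\<dots> \<ge> 0" using r2 by (intro add_nonneg_nonneg) auto
  finally have "a^2 - 2 * \<rho> * a * b + b^2 \<ge> 0" .
  then have "1 + ((a^2 - 2 * \<rho> * a * b + b^2) / (\<sigma>^2 * (1 - \<rho>^2))) / \<delta> > 0"
    using r2 s d by (intro add_pos_nonneg) auto
  moreover have "K2 \<sigma> \<rho> \<delta> > 0" unfolding K2_def using d s r2 by (simp add: Gamma_real_pos)
  ultimately show ?thesis unfolding p bivt_eq a_def b_def by simp
qed

lemma marginal:
  assumes d: "\<delta> > 2" and s: "\<sigma> > 0" and r: "-1 < \<rho>" "\<rho> < 1"
  shows "\<exists>C\<ge>0. \<forall>x. (\<integral>\<^sup>+y. ennreal (bivt_density \<mu> \<sigma> \<rho> \<delta> (x, y)) \<partial>lborel) = ennreal (C * t_density \<delta> \<mu> (\<sigma>\<^sup>2) x)"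
proof -
  have r2: "1 - \<rho>^2 > 0" using r by (simp add: abs_less_iff power2_less_eq_zero_iff abs_square_less_1)
  have K2p: "K2 \<sigma> \<rho> \<delta> > 0" unfolding K2_def using d s r2 by (simp add: Gamma_real_pos)
  define Jv where "Jv = sqrt pi * Gamma ((\<delta> + 2) / 2 - 1/2) / Gamma ((\<delta> + 2) / 2)"
  have Jv: "Jv > 0" unfolding Jv_def using d by (simp add: Gamma_real_pos)
  define Kt where "Kt = Gamma ((\<delta> + 1) / 2) / (sqrt (\<sigma>\<^sup>2 * \<delta> * pi) * Gamma (\<delta> / 2))"
  have Kt: "Kt > 0" unfolding Kt_def using d s by (simp add: Gamma_real_pos)
  define C where "C = \<sigma> * sqrt ((1 - \<rho>^2) * \<delta>) * K2 \<sigma> \<rho> \<delta> * Jv / Kt"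
  have C: "C \<ge> 0" unfolding C_def using s r2 d K2p Jv Kt by simp
  have J: "(\<integral>\<^sup>+w. ennreal ((1 + w\<^sup>2) powr (- ((\<delta> + 2) / 2))) \<partial>lborel) = ennreal Jv"
    unfolding Jv_def using d by (intro J_formula) simp
  have "(\<integral>\<^sup>+y. ennreal (bivt_density \<mu> \<sigma> \<rho> \<delta> (x, y)) \<partial>lborel) = ennreal (C * t_density \<delta> \<mu> (\<sigma>\<^sup>2) x)" for x
  proof -
    define a where "a = x - \<mu>"
    define P where "P = 1 + a^2 / (\<sigma>^2 * \<delta>)"
    have P: "P > 0" unfolding P_def using s d by (intro add_pos_nonneg) auto
    define L where "L = \<sigma> * sqrt ((1 - \<rho>^2) * \<delta> * P)"
    have L: "L > 0" unfolding L_def using s r2 d P by simp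
    have LL: "L^2 = \<sigma>^2 * ((1 - \<rho>^2) * \<delta> * P)" unfolding L_def using r2 d P
      by (simp add: power_mult_distrib)
    have inner: "bivt_density \<mu> \<sigma> \<rho> \<delta> (x, (\<mu> + \<rho> * a) + L * w) = K2 \<sigma> \<rho> \<delta> * (P powr (- (\<delta> + 2) / 2) * (1 + w\<^sup>2) powr (- ((\<delta> + 2) / 2)))" for w
    proof -
      have q: "(x - \<mu>)^2 - 2 * \<rho> * (x - \<mu>) * ((\<mu> + \<rho> * a) + L * w - \<mu>) + ((\<mu> + \<rho> * a) + L * w - \<mu>)^2
              = (1 - \<rho>^2) * a^2 + L^2 * w^2"
        unfolding a_def by (simp add: power2_eq_square algebra_simps)
      have "1 + (((1 - \<rho>^2) * a^2 + L^2 * w^2) / (\<sigma>^2 * (1 - \<rho>^2))) / \<delta> = P * (1 + w\<^sup>2)"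
        unfolding LL P_def using s r2 d by (simp add: field_simps)
      then have "1 + (((x - \<mu>)^2 - 2 * \<rho> * (x - \<mu>) * ((\<mu> + \<rho> * a) + L * w - \<mu>) + ((\<mu> + \<rho> * a) + L * w - \<mu>)^2) / (\<sigma>^2 * (1 - \<rho>^2))) / \<delta> = P * (1 + w\<^sup>2)"
        unfolding q .
      then show ?thesis unfolding bivt_eq using P
        by (simp add: powr_mult minus_divide_left)
    qed
    have "(\<integral>\<^sup>+y. ennreal (bivt_density \<mu> \<sigma> \<rho> \<delta> (x, y)) \<partial>lborel)
        = ennreal \<bar>L\<bar> * (\<integral>\<^sup>+w. ennreal (bivt_density \<mu> \<sigma> \<rho> \<delta> (x, (\<mu> + \<rho> * a) + L * w)) \<partial>lborel)"
      using L by (subst nn_integral_real_affine[where t="\<mu> + \<rho> * a" and c=L]) auto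
    also have "\<dots> = ennreal L * (ennreal (K2 \<sigma> \<rho> \<delta> * P powr (- (\<delta> + 2) / 2)) * (\<integral>\<^sup>+w. ennreal ((1 + w\<^sup>2) powr (- ((\<delta> + 2) / 2))) \<partial>lborel))"
      using L K2p by (subst nn_integral_cmult[symmetric]) (auto simp: inner ennreal_mult mult.assoc)
    also have "\<dots> = ennreal (L * (K2 \<sigma> \<rho> \<delta> * P powr (- (\<delta> + 2) / 2)) * Jv)"
      unfolding J using L K2p Jv by (simp add: ennreal_mult mult.assoc)
    also have "L * (K2 \<sigma> \<rho> \<delta> * P powr (- (\<delta> + 2) / 2)) * Jv = C * t_density \<delta> \<mu> (\<sigma>\<^sup>2) x"
    proof -
      have sP: "sqrt P * P powr (- (\<delta> + 2) / 2) = P powr (- (\<delta> + 1) / 2)"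
      proof -
        have "sqrt P * P powr (- (\<delta> + 2) / 2) = P powr (1/2) * P powr (- (\<delta> + 2) / 2)"
          using P by (simp add: powr_half_sqrt)
        also have "\<dots> = P powr (1/2 + - (\<delta> + 2) / 2)" by (simp add: powr_add)
        also have "1/2 + - (\<delta> + 2) / 2 = - (\<delta> + 1) / 2" by (simp add: field_simps)
        finally show ?thesis .
      qed
      have L2: "L = \<sigma> * sqrt ((1 - \<rho>^2) * \<delta>) * sqrt P" unfolding L_def by (simp add: real_sqrt_mult)
      have td: "t_density \<delta> \<mu> (\<sigma>\<^sup>2) x = Kt * P powr (- (\<delta> + 1) / 2)"
        unfolding t_density_def Kt_def P_def a_def by simp
      have "L * (K2 \<sigma> \<rho> \<delta> * P powr (- (\<delta> + 2) / 2)) * Jv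
          = (\<sigma> * sqrt ((1 - \<rho>^2) * \<delta>) * K2 \<sigma> \<rho> \<delta> * Jv) * (sqrt P * P powr (- (\<delta> + 2) / 2))"
        unfolding L2 by (simp add: mult_ac)
      also have "\<dots> = (\<sigma> * sqrt ((1 - \<rho>^2) * \<delta>) * K2 \<sigma> \<rho> \<delta> * Jv) * P powr (- (\<delta> + 1) / 2)"
        unfolding sP ..
      also have "\<dots> = C * t_density \<delta> \<mu> (\<sigma>\<^sup>2) x"
        unfolding td C_def using Kt by simp
      finally show ?thesis .
    qed
    finally show ?thesis .
  qed
  then show ?thesis using C by blast
qed

lemma lborel_reflect1:
  assumes c[measurable]: "c \<in> borel_measurable borel"
  shows "distr lborel lborel (\<lambda>p::real\<times>real. (fst p, c (fst p) - snd p)) = lborel"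
proof (rule measure_eqI)
  fix A :: "(real \<times> real) set" assume "A \<in> sets (distr lborel lborel (\<lambda>p::real\<times>real. (fst p, c (fst p) - snd p)))"
  then have A[measurable]: "A \<in> sets borel" by simp
  have m0: "(\<lambda>p::real\<times>real. (fst p, c (fst p) - snd p)) \<in> measurable (borel \<Otimes>\<^sub>M borel) (borel \<Otimes>\<^sub>M borel)"
    by measurable
  then have m: "(\<lambda>p::real\<times>real. (fst p, c (fst p) - snd p)) \<in> measurable lborel lborel" by (simp add: borel_prod)
  let ?f = "\<lambda>p::real\<times>real. (fst p, c (fst p) - snd p)"
  have S: "?f -` A \<inter> space lborel \<in> sets lborel" using m A by (intro measurable_sets[OF m]) simp
  have "emeasure (distr lborel lborel ?f) A = emeasure lborel (?f -` A \<inter> space lborel)"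
    by (rule emeasure_distr[OF m]) simp
  also have "\<dots> = (\<integral>\<^sup>+p. indicator (?f -` A \<inter> space lborel) p \<partial>lborel)"
    using S by simp
  also have "\<dots> = (\<integral>\<^sup>+p. indicator A (fst p, c (fst p) - snd p) \<partial>(lborel :: (real \<times> real) measure))"
    by (intro nn_integral_cong) (simp add: indicator_def)
  also have "\<dots> = (\<integral>\<^sup>+p. indicator A (fst p, c (fst p) - snd p) \<partial>(lborel \<Otimes>\<^sub>M lborel))"
    by (simp only: lborel_prod)
  also have "\<dots> = (\<integral>\<^sup>+x. \<integral>\<^sup>+y. indicator A (x, c x - y) \<partial>lborel \<partial>lborel)"
    by (subst lborel.nn_integral_fst[symmetric]) simp_all
  also have "\<dots> = (\<integral>\<^sup>+x. \<integral>\<^sup>+y. indicator A (x, y) \<partial>lborel \<partial>lborel)"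
  proof (rule nn_integral_cong)
    fix x :: real
    have "(\<integral>\<^sup>+y. indicator A (x, y) \<partial>lborel) = ennreal \<bar>-1\<bar> * (\<integral>\<^sup>+y. indicator A (x, c x + (-1) * y) \<partial>lborel)"
      by (rule nn_integral_real_affine) simp_all
    then show "(\<integral>\<^sup>+y. indicator A (x, c x - y) \<partial>lborel) = (\<integral>\<^sup>+y. indicator A (x, y) \<partial>lborel)"
      by simp
  qed
  also have "\<dots> = (\<integral>\<^sup>+p. indicator A p \<partial>(lborel \<Otimes>\<^sub>M lborel))"
    by (subst lborel.nn_integral_fst[symmetric]) (simp_all add: lborel_prod)
  also have "\<dots> = emeasure lborel A"
    by (simp add: lborel_prod)
  finally show "emeasure (distr lborel lborel (\<lambda>p::real\<times>real. (fst p, c (fst p) - snd p))) A = emeasure lborel A" .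
qed simp

lemma lborel_reflect2:
  assumes c[measurable]: "c \<in> borel_measurable borel"
  shows "distr lborel lborel (\<lambda>p::real\<times>real. (c (snd p) - fst p, snd p)) = lborel"
proof (rule measure_eqI)
  fix A :: "(real \<times> real) set" assume "A \<in> sets (distr lborel lborel (\<lambda>p::real\<times>real. (c (snd p) - fst p, snd p)))"
  then have A[measurable]: "A \<in> sets borel" by simp
  have m0: "(\<lambda>p::real\<times>real. (c (snd p) - fst p, snd p)) \<in> measurable (borel \<Otimes>\<^sub>M borel) (borel \<Otimes>\<^sub>M borel)"
    by measurable
  then have m: "(\<lambda>p::real\<times>real. (c (snd p) - fst p, snd p)) \<in> measurable lborel lborel" by (simp add: borel_prod)
  let ?f = "\<lambda>p::real\<times>real. (c (snd p) - fst p, snd p)"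
  have S: "?f -` A \<inter> space lborel \<in> sets lborel" using m A by (intro measurable_sets[OF m]) simp
  have "emeasure (distr lborel lborel ?f) A = emeasure lborel (?f -` A \<inter> space lborel)"
    by (rule emeasure_distr[OF m]) simp
  also have "\<dots> = (\<integral>\<^sup>+p. indicator (?f -` A \<inter> space lborel) p \<partial>lborel)"
    using S by simp
  also have "\<dots> = (\<integral>\<^sup>+p. indicator A (c (snd p) - fst p, snd p) \<partial>(lborel :: (real \<times> real) measure))"
    by (intro nn_integral_cong) (simp add: indicator_def)
  also have "\<dots> = (\<integral>\<^sup>+p. indicator A (c (snd p) - fst p, snd p) \<partial>(lborel \<Otimes>\<^sub>M lborel))"
    by (simp only: lborel_prod)
  also have "\<dots> = (\<integral>\<^sup>+y. \<integral>\<^sup>+x. indicator A (c y - x, y) \<partial>lborel \<partial>lborel)"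
    by (subst lborel_pair.nn_integral_snd[symmetric]) simp_all
  also have "\<dots> = (\<integral>\<^sup>+y. \<integral>\<^sup>+x. indicator A (x, y) \<partial>lborel \<partial>lborel)"
  proof (rule nn_integral_cong)
    fix y :: real
    have "(\<integral>\<^sup>+x. indicator A (x, y) \<partial>lborel) = ennreal \<bar>-1\<bar> * (\<integral>\<^sup>+x. indicator A (c y + (-1) * x, y) \<partial>lborel)"
      by (rule nn_integral_real_affine) simp_all
    then show "(\<integral>\<^sup>+x. indicator A (c y - x, y) \<partial>lborel) = (\<integral>\<^sup>+x. indicator A (x, y) \<partial>lborel)"
      by simp
  qed
  also have "\<dots> = (\<integral>\<^sup>+p. indicator A p \<partial>(lborel \<Otimes>\<^sub>M lborel))"
    by (subst lborel_pair.nn_integral_snd[symmetric]) (simp_all add: lborel_prod)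
  also have "\<dots> = emeasure lborel A"
    by (simp add: lborel_prod)
  finally show "emeasure (distr lborel lborel ?f) A = emeasure lborel A" .
qed simp

lemma ml1: "measurable (lborel::'a::euclidean_space measure) N = measurable borel N"
  by (rule measurable_cong_sets) simp_all

lemma meas_prod_eq: "measurable (lborel \<Otimes>\<^sub>M lborel) N = measurable (borel :: (real \<times> real) measure) N"
  unfolding lborel_prod by (rule measurable_cong_sets) simp_all

lemma mf: assumes A: "A \<in> sets (borel :: real measure)"
  shows "(\<lambda>p. ennreal (bivt_density \<mu> \<sigma> \<rho> \<delta> p) * indicator A (fst p)) \<in> borel_measurable (lborel \<Otimes>\<^sub>M lborel)"
proof -
  have b: "(\<lambda>p. ennreal (bivt_density \<mu> \<sigma> \<rho> \<delta> p)) \<in> borel_measurable borel"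
    using bivt_measurable by (rule measurable_compose) (rule measurable_ennreal)
  have f: "(fst :: real \<times> real \<Rightarrow> real) \<in> borel_measurable borel"
    by (intro borel_measurable_continuous_onI continuous_intros)
  have i: "(\<lambda>p::real\<times>real. indicator A (fst p) :: ennreal) \<in> borel_measurable borel"
    using f by (rule measurable_compose) (rule borel_measurable_indicator[OF A])
  show ?thesis unfolding meas_prod_eq using b i by (rule borel_measurable_times_ennreal)
qed

lemma mf2: assumes A: "A \<in> sets (borel :: real measure)"
  shows "(\<lambda>p. ennreal (bivt_density \<mu> \<sigma> \<rho> \<delta> p) * indicator A (snd p)) \<in> borel_measurable (lborel \<Otimes>\<^sub>M lborel)"
proof -
  have b: "(\<lambda>p. ennreal (bivt_density \<mu> \<sigma> \<rho> \<delta> p)) \<in> borel_measurable borel"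
    using bivt_measurable by (rule measurable_compose) (rule measurable_ennreal)
  have f: "(snd :: real \<times> real \<Rightarrow> real) \<in> borel_measurable borel"
    by (intro borel_measurable_continuous_onI continuous_intros)
  have i: "(\<lambda>p::real\<times>real. indicator A (snd p) :: ennreal) \<in> borel_measurable borel"
    using f by (rule measurable_compose) (rule borel_measurable_indicator[OF A])
  show ?thesis unfolding meas_prod_eq using b i by (rule borel_measurable_times_ennreal)
qed

lemma mB: "(\<lambda>p. ennreal (bivt_density \<mu> \<sigma> \<rho> \<delta> p)) \<in> borel_measurable lborel"
proof -
  have b: "(\<lambda>p. ennreal (bivt_density \<mu> \<sigma> \<rho> \<delta> p)) \<in> borel_measurable borel"
    using bivt_measurable by (rule measurable_compose) (rule measurable_ennreal)
  then show ?thesis by (simp only: ml1)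
qed

lemma mslice1: "(\<lambda>y. ennreal (bivt_density \<mu> \<sigma> \<rho> \<delta> (x, y))) \<in> borel_measurable lborel"
proof -
  have b: "(\<lambda>p. ennreal (bivt_density \<mu> \<sigma> \<rho> \<delta> p)) \<in> borel_measurable borel"
    using bivt_measurable by (rule measurable_compose) (rule measurable_ennreal)
  have f: "(\<lambda>y::real. (x, y)) \<in> borel_measurable borel"
    by (intro borel_measurable_continuous_onI continuous_intros)
  have "(\<lambda>y. ennreal (bivt_density \<mu> \<sigma> \<rho> \<delta> (x, y))) \<in> borel_measurable borel"
    using f b by (rule measurable_compose)
  then show ?thesis by (simp only: ml1)
qed

context
  fixes \<mu> \<sigma> \<rho> \<delta> :: real
  assumes d: "\<delta> > 2" and s: "\<sigma> > 0" and r: "-1 < \<rho>" "\<rho> < 1"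
begin

abbreviation "Bd \<equiv> density lborel (\<lambda>xy. ennreal (bivt_density \<mu> \<sigma> \<rho> \<delta> xy))"

lemma marg_distr:
  "\<exists>C\<ge>0. distr Bd lborel fst = density lborel (\<lambda>x. ennreal (C * t_density \<delta> \<mu> (\<sigma>\<^sup>2) x))
       \<and> distr Bd lborel snd = density lborel (\<lambda>x. ennreal (C * t_density \<delta> \<mu> (\<sigma>\<^sup>2) x))"
proof -
  obtain C where C: "C \<ge> 0" and mC: "\<And>x. (\<integral>\<^sup>+y. ennreal (bivt_density \<mu> \<sigma> \<rho> \<delta> (x, y)) \<partial>lborel) = ennreal (C * t_density \<delta> \<mu> (\<sigma>\<^sup>2) x)"
    using marginal[OF d s r] by blast
  have mfst: "fst \<in> measurable Bd lborel"
  proof -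
    have f: "(fst :: real \<times> real \<Rightarrow> real) \<in> borel_measurable borel"
      by (intro borel_measurable_continuous_onI continuous_intros)
    have "measurable Bd lborel = measurable (borel :: (real \<times> real) measure) borel"
      by (rule measurable_cong_sets) simp_all
    then show ?thesis using f by simp
  qed
  have msnd: "snd \<in> measurable Bd lborel"
  proof -
    have f: "(snd :: real \<times> real \<Rightarrow> real) \<in> borel_measurable borel"
      by (intro borel_measurable_continuous_onI continuous_intros)
    have "measurable Bd lborel = measurable (borel :: (real \<times> real) measure) borel"
      by (rule measurable_cong_sets) simp_all
    then show ?thesis using f by simp
  qed
  have "distr Bd lborel fst = density lborel (\<lambda>x. ennreal (C * t_density \<delta> \<mu> (\<sigma>\<^sup>2) x))"
  proof (rule measure_eqI)
    fix A :: "real set" assume "A \<in> sets (distr Bd lborel fst)"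
    then have A[measurable]: "A \<in> sets borel" by simp
    have "emeasure (distr Bd lborel fst) A = emeasure Bd (fst -` A \<inter> space Bd)"
      by (rule emeasure_distr[OF mfst]) simp
    also have "\<dots> = (\<integral>\<^sup>+p. ennreal (bivt_density \<mu> \<sigma> \<rho> \<delta> p) * indicator (fst -` A \<inter> space Bd) p \<partial>lborel)"
      using measurable_sets[OF mfst, of A] by (subst emeasure_density[OF mB]) simp_all
    also have "\<dots> = (\<integral>\<^sup>+p. ennreal (bivt_density \<mu> \<sigma> \<rho> \<delta> p) * indicator A (fst p) \<partial>lborel)"
      by (rule nn_integral_cong) (simp add: indicator_def)
    also have "\<dots> = (\<integral>\<^sup>+p. ennreal (bivt_density \<mu> \<sigma> \<rho> \<delta> p) * indicator A (fst p) \<partial>(lborel \<Otimes>\<^sub>M lborel))"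
      by (simp only: lborel_prod)
    also have "\<dots> = (\<integral>\<^sup>+x. \<integral>\<^sup>+y. ennreal (bivt_density \<mu> \<sigma> \<rho> \<delta> (x, y)) * indicator A (fst (x, y)) \<partial>lborel \<partial>lborel)"
      by (rule lborel.nn_integral_fst[symmetric, OF mf[OF A]])
    also have "\<dots> = (\<integral>\<^sup>+x. ennreal (C * t_density \<delta> \<mu> (\<sigma>\<^sup>2) x) * indicator A x \<partial>lborel)"
    proof (rule nn_integral_cong)
      fix x :: real
      show "(\<integral>\<^sup>+y. ennreal (bivt_density \<mu> \<sigma> \<rho> \<delta> (x, y)) * indicator A (fst (x, y)) \<partial>lborel) = ennreal (C * t_density \<delta> \<mu> (\<sigma>\<^sup>2) x) * indicator A x"
        unfolding fst_conv nn_integral_multc[OF mslice1] mC ..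
    qed
    also have "\<dots> = emeasure (density lborel (\<lambda>x. ennreal (C * t_density \<delta> \<mu> (\<sigma>\<^sup>2) x))) A"
      by (subst emeasure_density) auto
    finally show "emeasure (distr Bd lborel fst) A = emeasure (density lborel (\<lambda>x. ennreal (C * t_density \<delta> \<mu> (\<sigma>\<^sup>2) x))) A" .
  qed simp
  moreover have "distr Bd lborel snd = density lborel (\<lambda>x. ennreal (C * t_density \<delta> \<mu> (\<sigma>\<^sup>2) x))"
  proof (rule measure_eqI)
    fix A :: "real set" assume "A \<in> sets (distr Bd lborel snd)"
    then have A[measurable]: "A \<in> sets borel" by simp
    have "emeasure (distr Bd lborel snd) A = emeasure Bd (snd -` A \<inter> space Bd)"
      by (rule emeasure_distr[OF msnd]) simp
    also have "\<dots> = (\<integral>\<^sup>+p. ennreal (bivt_density \<mu> \<sigma> \<rho> \<delta> p) * indicator (snd -` A \<inter> space Bd) p \<partial>lborel)"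
      using measurable_sets[OF msnd, of A] by (subst emeasure_density[OF mB]) simp_all
    also have "\<dots> = (\<integral>\<^sup>+p. ennreal (bivt_density \<mu> \<sigma> \<rho> \<delta> p) * indicator A (snd p) \<partial>lborel)"
      by (rule nn_integral_cong) (simp add: indicator_def)
    also have "\<dots> = (\<integral>\<^sup>+p. ennreal (bivt_density \<mu> \<sigma> \<rho> \<delta> p) * indicator A (snd p) \<partial>(lborel \<Otimes>\<^sub>M lborel))"
      by (simp only: lborel_prod)
    also have "\<dots> = (\<integral>\<^sup>+y. \<integral>\<^sup>+x. ennreal (bivt_density \<mu> \<sigma> \<rho> \<delta> (x, y)) * indicator A (snd (x, y)) \<partial>lborel \<partial>lborel)"
      by (rule lborel_pair.nn_integral_snd[symmetric, OF mf2[OF A]])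
    also have "\<dots> = (\<integral>\<^sup>+y. ennreal (C * t_density \<delta> \<mu> (\<sigma>\<^sup>2) y) * indicator A y \<partial>lborel)"
    proof (rule nn_integral_cong)
      fix y :: real
      have "(\<integral>\<^sup>+x. ennreal (bivt_density \<mu> \<sigma> \<rho> \<delta> (x, y)) * indicator A (snd (x, y)) \<partial>lborel)
          = (\<integral>\<^sup>+x. ennreal (bivt_density \<mu> \<sigma> \<rho> \<delta> (y, x)) * indicator A y \<partial>lborel)"
        by (rule nn_integral_cong) (simp only: snd_conv, subst bivt_sym, rule refl)
      also have "\<dots> = ennreal (C * t_density \<delta> \<mu> (\<sigma>\<^sup>2) y) * indicator A y"
        unfolding nn_integral_multc[OF mslice1] mC ..
      finally show "(\<integral>\<^sup>+x. ennreal (bivt_density \<mu> \<sigma> \<rho> \<delta> (x, y)) * indicator A (snd (x, y)) \<partial>lborel) = ennreal (C * t_density \<delta> \<mu> (\<sigma>\<^sup>2) y) * indicator A y" .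
    qed
    also have "\<dots> = emeasure (density lborel (\<lambda>x. ennreal (C * t_density \<delta> \<mu> (\<sigma>\<^sup>2) x))) A"
      by (subst emeasure_density) auto
    finally show "emeasure (distr Bd lborel snd) A = emeasure (density lborel (\<lambda>x. ennreal (C * t_density \<delta> \<mu> (\<sigma>\<^sup>2) x))) A" .
  qed simp
  ultimately show ?thesis using C by blast
qed

end

lemma mpb: "measurable (borel \<Otimes>\<^sub>M borel) N = measurable (borel::(real\<times>real) measure) N"
  by (simp only: borel_prod)

lemma bivt_refl1: "bivt_density \<mu> \<sigma> \<rho> \<delta> (x, 2 * \<mu> + 2 * \<rho> * (x - \<mu>) - y) = bivt_density \<mu> \<sigma> \<rho> \<delta> (x, y)"
proof -
  have q: "(x - \<mu>)^2 - 2 * \<rho> * (x - \<mu>) * ((2 * \<mu> + 2 * \<rho> * (x - \<mu>) - y) - \<mu>) + ((2 * \<mu> + 2 * \<rho> * (x - \<mu>) - y) - \<mu>)^2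
     = (x - \<mu>)^2 - 2 * \<rho> * (x - \<mu>) * (y - \<mu>) + (y - \<mu>)^2"
    by (simp add: power2_eq_square algebra_simps)
  show ?thesis unfolding bivt_eq q ..
qed

lemma bivt_refl2: "bivt_density \<mu> \<sigma> \<rho> \<delta> (2 * \<mu> + 2 * \<rho> * (y - \<mu>) - x, y) = bivt_density \<mu> \<sigma> \<rho> \<delta> (x, y)"
  by (subst bivt_sym, subst bivt_refl1, subst bivt_sym, rule refl)

lemma ml2: "measurable M (lborel::'a::euclidean_space measure) = measurable M borel"
  by (rule measurable_cong_sets) simp_all

context
  fixes \<mu> \<sigma> \<rho> \<delta> :: real
  assumes d: "\<delta> > 2" and s: "\<sigma> > 0" and r: "-1 < \<rho>" "\<rho> < 1"
begin

lemma marg_t: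
  assumes P: "prob_space (Bd \<mu> \<sigma> \<rho> \<delta>)"
  shows "distr (Bd \<mu> \<sigma> \<rho> \<delta>) lborel fst = t_measure \<delta> \<mu> (\<sigma>\<^sup>2) \<and> distr (Bd \<mu> \<sigma> \<rho> \<delta>) lborel snd = t_measure \<delta> \<mu> (\<sigma>\<^sup>2)"
proof -
  obtain C where C: "C \<ge> 0" and h1: "distr (Bd \<mu> \<sigma> \<rho> \<delta>) lborel fst = density lborel (\<lambda>x. ennreal (C * t_density \<delta> \<mu> (\<sigma>\<^sup>2) x))"
    and h2: "distr (Bd \<mu> \<sigma> \<rho> \<delta>) lborel snd = density lborel (\<lambda>x. ennreal (C * t_density \<delta> \<mu> (\<sigma>\<^sup>2) x))"
    using marg_distr[OF d s r] by blast
  have d0: "\<delta> > 0" and s2: "\<sigma>\<^sup>2 > 0" using d s by auto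
  have mfst: "fst \<in> measurable (Bd \<mu> \<sigma> \<rho> \<delta>) lborel"
  proof -
    have f: "(fst :: real \<times> real \<Rightarrow> real) \<in> borel_measurable borel"
      by (intro borel_measurable_continuous_onI continuous_intros)
    have "measurable (Bd \<mu> \<sigma> \<rho> \<delta>) lborel = measurable (borel :: (real \<times> real) measure) borel"
      by (rule measurable_cong_sets) simp_all
    then show ?thesis using f by simp
  qed
  have "emeasure (distr (Bd \<mu> \<sigma> \<rho> \<delta>) lborel fst) UNIV = emeasure (Bd \<mu> \<sigma> \<rho> \<delta>) (fst -` UNIV \<inter> space (Bd \<mu> \<sigma> \<rho> \<delta>))"
    by (rule emeasure_distr[OF mfst]) simp
  also have "\<dots> = 1" using prob_space.emeasure_space_1[OF P] by simp
  finally have e1: "emeasure (distr (Bd \<mu> \<sigma> \<rho> \<delta>) lborel fst) UNIV = 1" .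
  have "emeasure (density lborel (\<lambda>x. ennreal (C * t_density \<delta> \<mu> (\<sigma>\<^sup>2) x))) UNIV
      = (\<integral>\<^sup>+x. ennreal C * ennreal (t_density \<delta> \<mu> (\<sigma>\<^sup>2) x) \<partial>lborel)"
    using C t_density_nonneg[OF d0 s2] by (subst emeasure_density) (auto simp: ennreal_mult)
  also have "\<dots> = ennreal C"
    by (subst nn_integral_cmult) (auto simp: t_density_nn_integral[OF d0 s2])
  finally have "ennreal C = 1" using e1 h1 by simp
  then have C1: "C = 1" using C by simp
  have "density lborel (\<lambda>x. ennreal (C * t_density \<delta> \<mu> (\<sigma>\<^sup>2) x)) = t_measure \<delta> \<mu> (\<sigma>\<^sup>2)"
    unfolding C1 t_measure_def by simp
  then show ?thesis using h1 h2 by simp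
qed

lemma zero1: "(\<integral>p. (snd p - \<mu> - \<rho> * (fst p - \<mu>)) * indicator {0<..} (fst p) \<partial>Bd \<mu> \<sigma> \<rho> \<delta>) = 0"
proof -
  let ?g = "\<lambda>p::real\<times>real. (snd p - \<mu> - \<rho> * (fst p - \<mu>)) * indicator {0<..} (fst p) :: real"
  let ?h = "\<lambda>p. bivt_density \<mu> \<sigma> \<rho> \<delta> p * ?g p"
  let ?R = "\<lambda>p::real\<times>real. (fst p, (\<lambda>x. 2 * \<mu> + 2 * \<rho> * (x - \<mu>)) (fst p) - snd p)"
  have mg: "?g \<in> borel_measurable lborel" unfolding ml1 mpb[symmetric] by measurable
  have mbv: "bivt_density \<mu> \<sigma> \<rho> \<delta> \<in> borel_measurable lborel" unfolding ml1 by (rule bivt_measurable)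
  have mh: "?h \<in> borel_measurable lborel" using mbv mg by (rule borel_measurable_times)
  have AEp: "AE x in lborel. 0 \<le> bivt_density \<mu> \<sigma> \<rho> \<delta> x"
    using d s r by (intro AE_I2 less_imp_le[OF bivt_pos]) auto
  have I: "(\<integral>p. ?g p \<partial>Bd \<mu> \<sigma> \<rho> \<delta>) = (\<integral>p. ?h p \<partial>lborel)"
    using integral_density[OF mg mbv AEp] by simp
  have mR0: "?R \<in> measurable (borel \<Otimes>\<^sub>M borel) (borel \<Otimes>\<^sub>M borel)" by measurable
  have mR: "?R \<in> measurable lborel lborel" using mR0 unfolding ml1 ml2 mpb by (simp only: borel_prod)
  have D: "distr lborel lborel ?R = lborel" by (rule lborel_reflect1) measurable
  have "(\<integral>p. ?h p \<partial>lborel) = (\<integral>p. ?h p \<partial>distr lborel lborel ?R)" by (simp only: D)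
  also have "\<dots> = (\<integral>p. ?h (?R p) \<partial>lborel)" by (rule integral_distr[OF mR]) (simp only: ml1 ml2 mh[unfolded ml1])
  also have "\<dots> = (\<integral>p. - ?h p \<partial>lborel)"
  proof (rule Bochner_Integration.integral_cong[OF refl])
    fix p :: "real \<times> real"
    obtain x y where p: "p = (x, y)" by (cases p)
    show "?h (?R p) = - ?h p" unfolding p fst_conv snd_conv bivt_refl1
      by (simp add: algebra_simps)
  qed
  also have "\<dots> = - (\<integral>p. ?h p \<partial>lborel)" by (rule Bochner_Integration.integral_minus)
  finally have "(\<integral>p. ?h p \<partial>lborel) = 0" by simp
  then show ?thesis using I by simp
qed

lemma zero2: "(\<integral>p. (fst p - \<mu> - \<rho> * (snd p - \<mu>)) * indicator {0<..} (snd p) \<partial>Bd \<mu> \<sigma> \<rho> \<delta>) = 0"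
proof -
  let ?g = "\<lambda>p::real\<times>real. (fst p - \<mu> - \<rho> * (snd p - \<mu>)) * indicator {0<..} (snd p) :: real"
  let ?h = "\<lambda>p. bivt_density \<mu> \<sigma> \<rho> \<delta> p * ?g p"
  let ?R = "\<lambda>p::real\<times>real. ((\<lambda>x. 2 * \<mu> + 2 * \<rho> * (x - \<mu>)) (snd p) - fst p, snd p)"
  have mg: "?g \<in> borel_measurable lborel" unfolding ml1 mpb[symmetric] by measurable
  have mbv: "bivt_density \<mu> \<sigma> \<rho> \<delta> \<in> borel_measurable lborel" unfolding ml1 by (rule bivt_measurable)
  have mh: "?h \<in> borel_measurable lborel" using mbv mg by (rule borel_measurable_times)
  have AEp: "AE x in lborel. 0 \<le> bivt_density \<mu> \<sigma> \<rho> \<delta> x"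
    using d s r by (intro AE_I2 less_imp_le[OF bivt_pos]) auto
  have I: "(\<integral>p. ?g p \<partial>Bd \<mu> \<sigma> \<rho> \<delta>) = (\<integral>p. ?h p \<partial>lborel)"
    using integral_density[OF mg mbv AEp] by simp
  have mR0: "?R \<in> measurable (borel \<Otimes>\<^sub>M borel) (borel \<Otimes>\<^sub>M borel)" by measurable
  have mR: "?R \<in> measurable lborel lborel" using mR0 unfolding ml1 ml2 mpb by (simp only: borel_prod)
  have D: "distr lborel lborel ?R = lborel" by (rule lborel_reflect2) measurable
  have "(\<integral>p. ?h p \<partial>lborel) = (\<integral>p. ?h p \<partial>distr lborel lborel ?R)" by (simp only: D)
  also have "\<dots> = (\<integral>p. ?h (?R p) \<partial>lborel)" by (rule integral_distr[OF mR]) (simp only: ml1 ml2 mh[unfolded ml1])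
  also have "\<dots> = (\<integral>p. - ?h p \<partial>lborel)"
  proof (rule Bochner_Integration.integral_cong[OF refl])
    fix p :: "real \<times> real"
    obtain x y where p: "p = (x, y)" by (cases p)
    show "?h (?R p) = - ?h p" unfolding p fst_conv snd_conv bivt_refl2
      by (simp add: algebra_simps)
  qed
  also have "\<dots> = - (\<integral>p. ?h p \<partial>lborel)" by (rule Bochner_Integration.integral_minus)
  finally have "(\<integral>p. ?h p \<partial>lborel) = 0" by simp
  then show ?thesis using I by simp
qed

end

lemma mfst_l: "(fst :: real \<times> real \<Rightarrow> real) \<in> measurable lborel lborel"
proof -
  have f: "(fst :: real \<times> real \<Rightarrow> real) \<in> borel_measurable borel"
    by (intro borel_measurable_continuous_onI continuous_intros)
  then show ?thesis unfolding ml1 ml2 .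
qed

lemma msnd_l: "(snd :: real \<times> real \<Rightarrow> real) \<in> measurable lborel lborel"
proof -
  have f: "(snd :: real \<times> real \<Rightarrow> real) \<in> borel_measurable borel"
    by (intro borel_measurable_continuous_onI continuous_intros)
  then show ?thesis unfolding ml1 ml2 .
qed

lemma degenerate_facts:
  fixes \<phi> :: "real \<Rightarrow> real" and G :: "real \<times> real \<Rightarrow> real"
  assumes d0: "\<delta> > 0" and s: "\<sigma> > 0"
    and B: "B = distr (t_measure \<delta> \<mu> (\<sigma>\<^sup>2)) lborel (\<lambda>x. (x, \<phi> x))"
    and phim: "\<phi> \<in> borel_measurable borel"
  shows "distr B lborel fst = t_measure \<delta> \<mu> (\<sigma>\<^sup>2)"
    and "distr B lborel snd = distr (t_measure \<delta> \<mu> (\<sigma>\<^sup>2)) lborel \<phi>"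
    and "G \<in> borel_measurable (lborel :: (real \<times> real) measure) \<Longrightarrow> (\<integral>p. G p \<partial>B) = (\<integral>x. G (x, \<phi> x) \<partial>t_measure \<delta> \<mu> (\<sigma>\<^sup>2))"
proof -
  have m0: "(\<lambda>x. (x, \<phi> x)) \<in> measurable borel (borel \<Otimes>\<^sub>M borel)" using phim by measurable
  have eqm: "measurable (t_measure \<delta> \<mu> (\<sigma>\<^sup>2)) (lborel :: (real \<times> real) measure) = measurable borel borel"
    by (rule measurable_cong_sets) simp_all
  have m: "(\<lambda>x. (x, \<phi> x)) \<in> measurable (t_measure \<delta> \<mu> (\<sigma>\<^sup>2)) lborel" unfolding eqm using m0 by (simp only: borel_prod)
  have "distr B lborel fst = distr (t_measure \<delta> \<mu> (\<sigma>\<^sup>2)) lborel (fst \<circ> (\<lambda>x. (x, \<phi> x)))"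
    unfolding B by (rule distr_distr[OF mfst_l m])
  also have "\<dots> = distr (t_measure \<delta> \<mu> (\<sigma>\<^sup>2)) lborel (\<lambda>x. x)" by (simp add: o_def)
  also have "\<dots> = t_measure \<delta> \<mu> (\<sigma>\<^sup>2)" by (rule distr_id2) simp
  finally show "distr B lborel fst = t_measure \<delta> \<mu> (\<sigma>\<^sup>2)" .
  have "distr B lborel snd = distr (t_measure \<delta> \<mu> (\<sigma>\<^sup>2)) lborel (snd \<circ> (\<lambda>x. (x, \<phi> x)))"
    unfolding B by (rule distr_distr[OF msnd_l m])
  then show "distr B lborel snd = distr (t_measure \<delta> \<mu> (\<sigma>\<^sup>2)) lborel \<phi>" by (simp add: o_def)
  assume G: "G \<in> borel_measurable lborel"
  show "(\<integral>p. G p \<partial>B) = (\<integral>x. G (x, \<phi> x) \<partial>t_measure \<delta> \<mu> (\<sigma>\<^sup>2))"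
    unfolding B by (rule integral_distr[OF m G])
qed

lemma B_facts:
  assumes d: "\<delta> > 2" and s: "\<sigma> > 0" and r: "-1 \<le> \<rho>" "\<rho> \<le> 1"
    and P: "prob_space (bivt_measure \<mu> \<sigma> \<rho> \<delta>)"
  shows "distr (bivt_measure \<mu> \<sigma> \<rho> \<delta>) lborel fst = t_measure \<delta> \<mu> (\<sigma>\<^sup>2)"
    and "distr (bivt_measure \<mu> \<sigma> \<rho> \<delta>) lborel snd = t_measure \<delta> \<mu> (\<sigma>\<^sup>2)"
    and "(\<integral>p. (snd p - \<mu> - \<rho> * (fst p - \<mu>)) * indicator {0<..} (fst p) \<partial>bivt_measure \<mu> \<sigma> \<rho> \<delta>) = 0"
    and "(\<integral>p. (fst p - \<mu> - \<rho> * (snd p - \<mu>)) * indicator {0<..} (snd p) \<partial>bivt_measure \<mu> \<sigma> \<rho> \<delta>) = 0"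
proof -
  have d0: "\<delta> > 0" using d by simp
  have mg1: "(\<lambda>p::real\<times>real. (snd p - \<mu> - \<rho> * (fst p - \<mu>)) * indicator {0<..} (fst p) :: real) \<in> borel_measurable lborel"
    unfolding ml1 mpb[symmetric] by measurable
  have mg2: "(\<lambda>p::real\<times>real. (fst p - \<mu> - \<rho> * (snd p - \<mu>)) * indicator {0<..} (snd p) :: real) \<in> borel_measurable lborel"
    unfolding ml1 mpb[symmetric] by measurable
  have "(distr (bivt_measure \<mu> \<sigma> \<rho> \<delta>) lborel fst = t_measure \<delta> \<mu> (\<sigma>\<^sup>2)
    \<and> distr (bivt_measure \<mu> \<sigma> \<rho> \<delta>) lborel snd = t_measure \<delta> \<mu> (\<sigma>\<^sup>2))
    \<and> (\<integral>p. (snd p - \<mu> - \<rho> * (fst p - \<mu>)) * indicator {0<..} (fst p) \<partial>bivt_measure \<mu> \<sigma> \<rho> \<delta>) = 0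
    \<and> (\<integral>p. (fst p - \<mu> - \<rho> * (snd p - \<mu>)) * indicator {0<..} (snd p) \<partial>bivt_measure \<mu> \<sigma> \<rho> \<delta>) = 0"
  proof (cases "\<rho> = -1")
    case True
    have B: "bivt_measure \<mu> \<sigma> \<rho> \<delta> = distr (t_measure \<delta> \<mu> (\<sigma>\<^sup>2)) lborel (\<lambda>x. (x, 2 * \<mu> - x))"
      unfolding bivt_measure_def using True by simp
    have phim: "(\<lambda>x::real. 2 * \<mu> - x) \<in> borel_measurable borel" by measurable
    note F = degenerate_facts[OF d0 s B phim]
    show ?thesis
      using F(1) F(2)[unfolded t_measure_reflect] F(3)[OF mg1] F(3)[OF mg2] True by (simp add: algebra_simps)
  next
    case False
    show ?thesis
    proof (cases "\<rho> = 1")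
      case True
      have B: "bivt_measure \<mu> \<sigma> \<rho> \<delta> = distr (t_measure \<delta> \<mu> (\<sigma>\<^sup>2)) lborel (\<lambda>x. (x, x))"
        unfolding bivt_measure_def using True by simp
      have phim: "(\<lambda>x::real. x) \<in> borel_measurable borel" by measurable
      note F = degenerate_facts[OF d0 s B phim]
      show ?thesis
        using F(1) F(2) F(3)[OF mg1] F(3)[OF mg2] True by (simp add: distr_id2)
    next
      case False2: False
      have r': "-1 < \<rho>" "\<rho> < 1" using r False False2 by auto
      have B: "bivt_measure \<mu> \<sigma> \<rho> \<delta> = Bd \<mu> \<sigma> \<rho> \<delta>"
        unfolding bivt_measure_def using False False2 by simp
      show ?thesis unfolding B
        using marg_t[OF d s r' P[unfolded B]] zero1[OF d s r'] zero2[OF d s r'] by simp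
    qed
  qed
  then show "distr (bivt_measure \<mu> \<sigma> \<rho> \<delta>) lborel fst = t_measure \<delta> \<mu> (\<sigma>\<^sup>2)"
    and "distr (bivt_measure \<mu> \<sigma> \<rho> \<delta>) lborel snd = t_measure \<delta> \<mu> (\<sigma>\<^sup>2)"
    and "(\<integral>p. (snd p - \<mu> - \<rho> * (fst p - \<mu>)) * indicator {0<..} (fst p) \<partial>bivt_measure \<mu> \<sigma> \<rho> \<delta>) = 0"
    and "(\<integral>p. (fst p - \<mu> - \<rho> * (snd p - \<mu>)) * indicator {0<..} (snd p) \<partial>bivt_measure \<mu> \<sigma> \<rho> \<delta>) = 0"
    by auto
qed

theorem proposition7:
  fixes M :: "'w measure" and A :: "'w \<Rightarrow> 'c" and u v :: 'c
    and U V :: "'w \<Rightarrow> real" and p_u p_v \<mu> \<sigma> \<rho> \<delta> :: real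
  assumes "prob_space M"
    and "u \<noteq> v"
    and "A \<in> measurable M (count_space UNIV)"
    and "\<forall>\<omega>\<in>space M. A \<omega> \<in> {u, v}"
    and "measure M {\<omega>\<in>space M. A \<omega> = u} = p_u"
    and "measure M {\<omega>\<in>space M. A \<omega> = v} = p_v"
    and "p_u + p_v = 1"
    and "U \<in> borel_measurable M" and "V \<in> borel_measurable M"
    and "\<forall>c. \<forall>B \<in> sets (borel :: (real \<times> real) measure).
           measure M {\<omega>\<in>space M. A \<omega> = c \<and> (U \<omega>, V \<omega>) \<in> B}
         = measure M {\<omega>\<in>space M. A \<omega> = c} * measure M {\<omega>\<in>space M. (U \<omega>, V \<omega>) \<in> B}"
    and "\<mu> < 0" and "\<sigma> > 0" and "\<delta> > 2" and "\<rho> \<le> 1"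
    and "distr M lborel (\<lambda>\<omega>. (U \<omega>, V \<omega>)) = bivt_measure \<mu> \<sigma> \<rho> \<delta>"
    and "-1 \<le> \<rho>"
    and "\<rho> < 2 * (-\<mu> / \<sigma>) * W_fun \<delta> (-\<mu> / \<sigma>) - 1"
  shows "(let f = (\<lambda>z::real.
              p_u * measure M {\<omega>\<in>space M. U \<omega> > z}
                  * cond_exp_event M (\<lambda>\<omega>. U \<omega> + V \<omega>) {\<omega>\<in>space M. U \<omega> > z}
            + p_v * measure M {\<omega>\<in>space M. V \<omega> > z}
                  * cond_exp_event M (\<lambda>\<omega>. U \<omega> + V \<omega>) {\<omega>\<in>space M. V \<omega> > z})
         in f 0 < 0)"
proof -
  interpret P: prob_space M by (rule assms(1))
  note Um[measurable] = assms(8) and Vm[measurable] = assms(9)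
  have d: "\<delta> > 2" by (rule assms(13))
  have s: "\<sigma> > 0" by (rule assms(12))
  have r1: "-1 \<le> \<rho>" by (rule assms(16))
  have r2: "\<rho> \<le> 1" by (rule assms(14))
  have mu: "\<mu> < 0" by (rule assms(11))
  have d0: "\<delta> > 0" and s2: "\<sigma>\<^sup>2 > 0" using d s by auto
  let ?B = "bivt_measure \<mu> \<sigma> \<rho> \<delta>"
  let ?T = "t_measure \<delta> \<mu> (\<sigma>\<^sup>2)"
  have UV: "(\<lambda>\<omega>. (U \<omega>, V \<omega>)) \<in> measurable M lborel"
  proof -
    have "(\<lambda>\<omega>. (U \<omega>, V \<omega>)) \<in> measurable M (borel \<Otimes>\<^sub>M borel)" by measurable
    then show ?thesis unfolding ml2 by (simp only: borel_prod)
  qed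
  have distrB: "distr M lborel (\<lambda>\<omega>. (U \<omega>, V \<omega>)) = ?B" by (rule assms(15))
  have PB: "prob_space ?B" using P.prob_space_distr[OF UV] distrB by simp
  interpret PB: prob_space ?B by (rule PB)
  have PT: "prob_space ?T" by (rule prob_space_t_measure[OF d0 s2])
  interpret PT: prob_space ?T by (rule PT)
  note BF = B_facts[OF d s r1 r2 PB]
  have setsB: "sets ?B = sets (lborel :: (real \<times> real) measure)"
    by (simp add: bivt_measure_def)
  have mB: "measurable ?B N = measurable (lborel :: (real \<times> real) measure) N" for N :: "'z measure"
    by (rule measurable_cong_sets) (simp_all add: setsB)
  have mfstB: "fst \<in> measurable ?B lborel" unfolding mB by (rule mfst_l)
  have msndB: "snd \<in> measurable ?B lborel" unfolding mB by (rule msnd_l)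
  define F where "F = (\<lambda>x::real. (2 * \<mu> + (1 + \<rho>) * (x - \<mu>)) * indicator {0<..} x)"
  have mF: "F \<in> borel_measurable lborel" unfolding F_def ml1 by measurable
  have intx: "integrable ?T (\<lambda>x. x)" by (rule integrable_t_measure_x[OF d s])
  have intF: "integrable ?T F"
  proof -
    have "integrable ?T (\<lambda>x. (2 * \<mu> + (1 + \<rho>) * (x - \<mu>)))"
      using intx by auto
    then show ?thesis unfolding F_def by (intro integrable_real_mult_indicator) auto
  qed
  have keyF: "(\<integral>x. F x \<partial>?T) < 0"
    unfolding F_def using key_1d[OF d s mu r1 assms(17)] .
  have mid: "(\<lambda>x::real. x) \<in> borel_measurable lborel"
    unfolding ml1 by (intro borel_measurable_continuous_onI continuous_intros)
  have intfst: "integrable ?B (\<lambda>p. fst p)"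
    by (rule integrable_distr_eq[OF mfstB mid, unfolded BF(1), THEN iffD1, OF intx])
  have intsnd: "integrable ?B (\<lambda>p. snd p)"
    by (rule integrable_distr_eq[OF msndB mid, unfolded BF(2), THEN iffD1, OF intx])
  have intFfst: "integrable ?B (\<lambda>p. F (fst p))"
    by (rule integrable_distr_eq[OF mfstB mF, unfolded BF(1), THEN iffD1, OF intF])
  have intFsnd: "integrable ?B (\<lambda>p. F (snd p))"
    by (rule integrable_distr_eq[OF msndB mF, unfolded BF(2), THEN iffD1, OF intF])
  have IFfst: "(\<integral>p. F (fst p) \<partial>?B) = (\<integral>x. F x \<partial>?T)"
    by (rule integral_distr[OF mfstB mF, unfolded BF(1), symmetric])
  have IFsnd: "(\<integral>p. F (snd p) \<partial>?B) = (\<integral>x. F x \<partial>?T)"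
    by (rule integral_distr[OF msndB mF, unfolded BF(2), symmetric])
  define Z1 where "Z1 = (\<lambda>p::real\<times>real. (snd p - \<mu> - \<rho> * (fst p - \<mu>)) * indicator {0<..} (fst p) :: real)"
  define Z2 where "Z2 = (\<lambda>p::real\<times>real. (fst p - \<mu> - \<rho> * (snd p - \<mu>)) * indicator {0<..} (snd p) :: real)"
  have mZ1: "Z1 \<in> borel_measurable ?B" unfolding Z1_def mB ml1 mpb[symmetric] by measurable
  have mZ2: "Z2 \<in> borel_measurable ?B" unfolding Z2_def mB ml1 mpb[symmetric] by measurable
  have intZ1: "integrable ?B Z1"
  proof (rule Bochner_Integration.integrable_bound[OF _ mZ1])
    show "integrable ?B (\<lambda>p. snd p - \<mu> - \<rho> * (fst p - \<mu>))" using intfst intsnd by auto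
    show "AE x in ?B. norm (Z1 x) \<le> norm (snd x - \<mu> - \<rho> * (fst x - \<mu>))"
      by (intro AE_I2) (simp add: Z1_def indicator_def)
  qed
  have intZ2: "integrable ?B Z2"
  proof (rule Bochner_Integration.integrable_bound[OF _ mZ2])
    show "integrable ?B (\<lambda>p. fst p - \<mu> - \<rho> * (snd p - \<mu>))" using intfst intsnd by auto
    show "AE x in ?B. norm (Z2 x) \<le> norm (fst x - \<mu> - \<rho> * (snd x - \<mu>))"
      by (intro AE_I2) (simp add: Z2_def indicator_def)
  qed
  define G1 where "G1 = (\<lambda>p::real\<times>real. (fst p + snd p) * indicator {0<..} (fst p) :: real)"
  define G2 where "G2 = (\<lambda>p::real\<times>real. (fst p + snd p) * indicator {0<..} (snd p) :: real)"
  have mG1: "G1 \<in> borel_measurable lborel" unfolding G1_def ml1 mpb[symmetric] by measurable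
  have mG2: "G2 \<in> borel_measurable lborel" unfolding G2_def ml1 mpb[symmetric] by measurable
  have IG1: "(\<integral>p. G1 p \<partial>?B) < 0"
  proof -
    have "(\<integral>p. G1 p \<partial>?B) = (\<integral>p. F (fst p) + Z1 p \<partial>?B)"
      by (rule Bochner_Integration.integral_cong[OF refl]) (simp add: G1_def F_def Z1_def algebra_simps)
    also have "\<dots> = (\<integral>p. F (fst p) \<partial>?B) + (\<integral>p. Z1 p \<partial>?B)"
      by (rule Bochner_Integration.integral_add[OF intFfst intZ1])
    also have "(\<integral>p. Z1 p \<partial>?B) = 0" unfolding Z1_def by (rule BF(3))
    finally show ?thesis using IFfst keyF by simp
  qed
  have IG2: "(\<integral>p. G2 p \<partial>?B) < 0"
  proof -
    have "(\<integral>p. G2 p \<partial>?B) = (\<integral>p. F (snd p) + Z2 p \<partial>?B)"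
      by (rule Bochner_Integration.integral_cong[OF refl]) (simp add: G2_def F_def Z2_def algebra_simps)
    also have "\<dots> = (\<integral>p. F (snd p) \<partial>?B) + (\<integral>p. Z2 p \<partial>?B)"
      by (rule Bochner_Integration.integral_add[OF intFsnd intZ2])
    also have "(\<integral>p. Z2 p \<partial>?B) = 0" unfolding Z2_def by (rule BF(4))
    finally show ?thesis using IFsnd keyF by simp
  qed
  define S1 where "S1 = {\<omega>\<in>space M. U \<omega> > 0}"
  define S2 where "S2 = {\<omega>\<in>space M. V \<omega> > 0}"
  have S1m: "S1 \<in> sets M" unfolding S1_def by measurable
  have S2m: "S2 \<in> sets M" unfolding S2_def by measurable
  define I1 where "I1 = (\<integral>\<omega>. (U \<omega> + V \<omega>) * indicator S1 \<omega> \<partial>M)"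
  define I2 where "I2 = (\<integral>\<omega>. (U \<omega> + V \<omega>) * indicator S2 \<omega> \<partial>M)"
  have I1: "I1 < 0"
  proof -
    have "I1 = (\<integral>\<omega>. G1 (U \<omega>, V \<omega>) \<partial>M)"
      unfolding I1_def by (rule Bochner_Integration.integral_cong[OF refl]) (simp add: G1_def S1_def indicator_def)
    also have "\<dots> = (\<integral>p. G1 p \<partial>distr M lborel (\<lambda>\<omega>. (U \<omega>, V \<omega>)))"
      by (rule integral_distr[OF UV mG1, symmetric])
    finally show ?thesis using IG1 distrB by simp
  qed
  have I2: "I2 < 0"
  proof -
    have "I2 = (\<integral>\<omega>. G2 (U \<omega>, V \<omega>) \<partial>M)"
      unfolding I2_def by (rule Bochner_Integration.integral_cong[OF refl]) (simp add: G2_def S2_def indicator_def)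
    also have "\<dots> = (\<integral>p. G2 p \<partial>distr M lborel (\<lambda>\<omega>. (U \<omega>, V \<omega>)))"
      by (rule integral_distr[OF UV mG2, symmetric])
    finally show ?thesis using IG2 distrB by simp
  qed
  have nz: "measure M S \<noteq> 0" if Sm: "S \<in> sets M" and IS: "(\<integral>\<omega>. (U \<omega> + V \<omega>) * indicator S \<omega> \<partial>M) < 0" for S
  proof
    assume m0: "measure M S = 0"
    then have "S \<in> null_sets M" using Sm by (simp add: P.emeasure_eq_measure null_sets_def)
    then have "AE \<omega> in M. \<omega> \<notin> S" by (rule AE_not_in)
    moreover have "(\<lambda>\<omega>. (U \<omega> + V \<omega>) * indicator S \<omega>) \<in> borel_measurable M"
      using Sm by measurable
    ultimately have "(\<integral>\<omega>. (U \<omega> + V \<omega>) * indicator S \<omega> \<partial>M) = (\<integral>\<omega>. 0 \<partial>M)"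
      by (intro integral_cong_AE) (auto simp: indicator_def)
    then show False using IS by simp
  qed
  have m1: "measure M S1 \<noteq> 0" using nz[OF S1m] I1 unfolding I1_def by simp
  have m2: "measure M S2 \<noteq> 0" using nz[OF S2m] I2 unfolding I2_def by simp
  have pu: "p_u \<ge> 0" using assms(5) by (metis measure_nonneg)
  have pv: "p_v \<ge> 0" using assms(6) by (metis measure_nonneg)
  have f0: "p_u * measure M S1 * cond_exp_event M (\<lambda>\<omega>. U \<omega> + V \<omega>) S1
          + p_v * measure M S2 * cond_exp_event M (\<lambda>\<omega>. U \<omega> + V \<omega>) S2 = p_u * I1 + p_v * I2"
    unfolding cond_exp_event_def I1_def I2_def using m1 m2 by simp
  have "p_u * I1 \<le> p_u * max I1 I2" using pu by (intro mult_left_mono) auto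
  moreover have "p_v * I2 \<le> p_v * max I1 I2" using pv by (intro mult_left_mono) auto
  moreover have "p_u * max I1 I2 + p_v * max I1 I2 = max I1 I2" using assms(7) by (simp add: distrib_right[symmetric])
  moreover have "max I1 I2 < 0" using I1 I2 by simp
  ultimately have "p_u * I1 + p_v * I2 < 0" by linarith
  then show ?thesis unfolding Let_def using f0 unfolding S1_def S2_def by simp
qed

end
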